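(* Let $f$ be a local rule for conductances, i.e. a function assigning to each pair of positive integer degrees a positive value, symmetric in its arguments, which for every graph $G$ defines the conductance $c_f(u,v)=f(d(u),d(v))$ on each edge $(u,v)$. Then either $f$ is roughly equivalent to the minimum degree rule $c(u,v)=\frac{1}{\min[d(u),d(v)]}$, or the cyclic cover time under $c_f$ is not bounded by $O(n^2)$: for every constant $K>0$ there exists a connected graph $G$ on some number $n$ of vertices with $CYC[G,c_f]>Kn^2$.
   Context: $d(v)$ denotes the degree of $v$. Two local rules $c_1,c_2$ are roughly equivalent if there exist constants $0<\alpha\le\beta$ such that for every graph and every edge $e$, $\alpha c_1(e)\le c_2(e)\le \beta c_1(e)$. The random walk associated with a conductance function $c$ on a connected graph $G$ moves from the current vertex $v$ to a neighbor $u$ with probability $\frac{c(v,u)}{\sum_{w\in N(v)}c(v,w)}$. The hitting time $H[u,v]$ is the expected number of steps for the walk started at $u$ to reach $v$, and the cyclic cover time is $CYC[G,c]=\min_{\sigma}\left(\sum_{i=1}^{n-1}H[v_{\sigma(i)},v_{\sigma(i+1)}]+H[v_{\sigma(n)},v_{\sigma(1)}]\right)$, minimum over orderings $\sigma$ of the $n$ vertices. *)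

theory Defs
  imports Complex_Main
begin

definition simple_graph :: "nat set \<Rightarrow> (nat \<Rightarrow> nat \<Rightarrow> bool) \<Rightarrow> bool" where
  "simple_graph V E \<longleftrightarrow> finite V \<and>
     (\<forall>u v. E u v \<longrightarrow> u \<in> V \<and> v \<in> V \<and> u \<noteq> v \<and> E v u)"

definition graph_connected :: "nat set \<Rightarrow> (nat \<Rightarrow> nat \<Rightarrow> bool) \<Rightarrow> bool" where
  "graph_connected V E \<longleftrightarrow> V \<noteq> {} \<and> (\<forall>u\<in>V. \<forall>v\<in>V. E\<^sup>*\<^sup>* u v)"

definition nbrs :: "nat set \<Rightarrow> (nat \<Rightarrow> nat \<Rightarrow> bool) \<Rightarrow> nat \<Rightarrow> nat set" where
  "nbrs V E v = {u \<in> V. E v u}"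

definition deg :: "nat set \<Rightarrow> (nat \<Rightarrow> nat \<Rightarrow> bool) \<Rightarrow> nat \<Rightarrow> nat" where
  "deg V E v = card (nbrs V E v)"

type_synonym cond_rule = "nat set \<Rightarrow> (nat \<Rightarrow> nat \<Rightarrow> bool) \<Rightarrow> nat \<Rightarrow> nat \<Rightarrow> real"

definition local_cond :: "(nat \<Rightarrow> nat \<Rightarrow> real) \<Rightarrow> cond_rule" where
  "local_cond f V E u v = f (deg V E u) (deg V E v)"

definition min_deg_rule :: cond_rule where
  "min_deg_rule V E u v = 1 / real (min (deg V E u) (deg V E v))"

definition roughly_equivalent :: "cond_rule \<Rightarrow> cond_rule \<Rightarrow> bool" where
  "roughly_equivalent c1 c2 \<longleftrightarrow> (\<exists>\<alpha> \<beta>. 0 < \<alpha> \<and> \<alpha> \<le> \<beta> \<and>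
     (\<forall>V E u v. simple_graph V E \<and> E u v \<longrightarrow>
        \<alpha> * c1 V E u v \<le> c2 V E u v \<and> c2 V E u v \<le> \<beta> * c1 V E u v))"

definition trans_prob :: "nat set \<Rightarrow> (nat \<Rightarrow> nat \<Rightarrow> bool) \<Rightarrow> (nat \<Rightarrow> nat \<Rightarrow> real)
    \<Rightarrow> nat \<Rightarrow> nat \<Rightarrow> real" where
  "trans_prob V E c v u = c v u / (\<Sum>w\<in>nbrs V E v. c v w)"

text \<open>nohit V E c v t u = probability that the walk started at u has not visited v
 at any of the times 0..t, i.e. P_u(T_v > t).\<close>
fun nohit :: "nat set \<Rightarrow> (nat \<Rightarrow> nat \<Rightarrow> bool) \<Rightarrow> (nat \<Rightarrow> nat \<Rightarrow> real)
    \<Rightarrow> nat \<Rightarrow> nat \<Rightarrow> nat \<Rightarrow> real" where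
  "nohit V E c v 0 u = (if u = v then 0 else 1)"
| "nohit V E c v (Suc t) u = (if u = v then 0 else
     (\<Sum>w\<in>nbrs V E u. trans_prob V E c u w * nohit V E c v t w))"

text \<open>Hitting time H[u,v] = E_u[T_v] = sum_{t>=0} P_u(T_v > t).\<close>
definition hitting_time :: "nat set \<Rightarrow> (nat \<Rightarrow> nat \<Rightarrow> bool) \<Rightarrow> (nat \<Rightarrow> nat \<Rightarrow> real)
    \<Rightarrow> nat \<Rightarrow> nat \<Rightarrow> real" where
  "hitting_time V E c u v = (\<Sum>t. nohit V E c v t u)"

definition cyc_sum :: "nat set \<Rightarrow> (nat \<Rightarrow> nat \<Rightarrow> bool) \<Rightarrow> (nat \<Rightarrow> nat \<Rightarrow> real)
    \<Rightarrow> nat list \<Rightarrow> real" where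
  "cyc_sum V E c xs = (\<Sum>i<length xs. hitting_time V E c (xs ! i) (xs ! ((i + 1) mod length xs)))"

definition cyclic_cover_time :: "nat set \<Rightarrow> (nat \<Rightarrow> nat \<Rightarrow> bool) \<Rightarrow> (nat \<Rightarrow> nat \<Rightarrow> real) \<Rightarrow> real" where
  "cyclic_cover_time V E c = Min {cyc_sum V E c xs | xs. distinct xs \<and> set xs = V}"

end

theory Submission
  imports Defs "HOL-Library.Nat_Bijection"
begin

definition walk_ok :: "nat set \<Rightarrow> (nat \<Rightarrow> nat \<Rightarrow> bool) \<Rightarrow> (nat \<Rightarrow> nat \<Rightarrow> real) \<Rightarrow> bool" where
  "walk_ok V E c \<longleftrightarrow> simple_graph V E \<and> (\<forall>x\<in>V. nbrs V E x \<noteq> {}) \<and> (\<forall>x y. E x y \<longrightarrow> 0 < c x y)"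

lemma nbrs_sub: "nbrs V E x \<subseteq> V"
  by (auto simp: nbrs_def)

lemma nbrs_fin: "simple_graph V E \<Longrightarrow> finite (nbrs V E x)"
  by (meson finite_subset nbrs_sub simple_graph_def)

lemma csum_pos:
  assumes "walk_ok V E c" "x \<in> V"
  shows "0 < (\<Sum>w\<in>nbrs V E x. c x w)"
proof -
  have fin: "finite (nbrs V E x)" using assms nbrs_fin walk_ok_def by blast
  have ne: "nbrs V E x \<noteq> {}" using assms walk_ok_def by blast
  have "\<forall>w\<in>nbrs V E x. 0 < c x w" using assms by (auto simp: walk_ok_def nbrs_def)
  then show ?thesis using fin ne by (simp add: sum_pos)
qed

lemma tp_pos:
  assumes "walk_ok V E c" "x \<in> V" "w \<in> nbrs V E x"
  shows "0 < trans_prob V E c x w"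
proof -
  have "0 < c x w" using assms by (auto simp: walk_ok_def nbrs_def)
  then show ?thesis using csum_pos[OF assms(1,2)] by (simp add: trans_prob_def)
qed

lemma tp_sum:
  assumes "walk_ok V E c" "x \<in> V"
  shows "(\<Sum>w\<in>nbrs V E x. trans_prob V E c x w) = 1"
  using csum_pos[OF assms] by (simp add: trans_prob_def sum_divide_distrib[symmetric])

lemma nohit_v[simp]: "nohit V E c v t v = 0"
  by (cases t) auto

lemma nohit_bounds:
  assumes "walk_ok V E c"
  shows "x \<in> V \<Longrightarrow> 0 \<le> nohit V E c v t x \<and> nohit V E c v t x \<le> 1"
proof (induction t arbitrary: x)
  case 0 then show ?case by simp
next
  case (Suc t)
  show ?case
  proof (cases "x = v")
    case True then show ?thesis by simp
  next
    case False
    have sub: "nbrs V E x \<subseteq> V" by (rule nbrs_sub)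
    have a: "0 \<le> (\<Sum>w\<in>nbrs V E x. trans_prob V E c x w * nohit V E c v t w)"
    proof (rule sum_nonneg)
      fix w assume w: "w \<in> nbrs V E x"
      then have "0 \<le> nohit V E c v t w" using Suc.IH sub by blast
      then show "0 \<le> trans_prob V E c x w * nohit V E c v t w"
        using tp_pos[OF assms Suc.prems w] by simp
    qed
    have "(\<Sum>w\<in>nbrs V E x. trans_prob V E c x w * nohit V E c v t w) \<le> (\<Sum>w\<in>nbrs V E x. trans_prob V E c x w)"
    proof (rule sum_mono)
      fix w assume w: "w \<in> nbrs V E x"
      then have "nohit V E c v t w \<le> 1" using Suc.IH sub by blast
      then show "trans_prob V E c x w * nohit V E c v t w \<le> trans_prob V E c x w"
        using tp_pos[OF assms Suc.prems w] by (simp add: mult_left_le)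
    qed
    then show ?thesis using a False tp_sum[OF assms Suc.prems] by simp
  qed
qed

lemma nohit_Suc_le:
  assumes "walk_ok V E c"
  shows "x \<in> V \<Longrightarrow> nohit V E c v (Suc t) x \<le> nohit V E c v t x"
proof (induction t arbitrary: x)
  case 0 then show ?case using nohit_bounds[OF assms 0, of v "Suc 0"] by auto
next
  case (Suc t)
  show ?case
  proof (cases "x = v")
    case True then show ?thesis by simp
  next
    case False
    have "(\<Sum>w\<in>nbrs V E x. trans_prob V E c x w * nohit V E c v (Suc t) w)
        \<le> (\<Sum>w\<in>nbrs V E x. trans_prob V E c x w * nohit V E c v t w)"
    proof (rule sum_mono)
      fix w assume w: "w \<in> nbrs V E x"
      then have "nohit V E c v (Suc t) w \<le> nohit V E c v t w" using Suc.IH nbrs_sub by blast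
      then show "trans_prob V E c x w * nohit V E c v (Suc t) w \<le> trans_prob V E c x w * nohit V E c v t w"
        using tp_pos[OF assms Suc.prems w] by (simp add: mult_left_mono)
    qed
    then show ?thesis using False by simp
  qed
qed

lemma nohit_antimono:
  assumes "walk_ok V E c" "x \<in> V" "t \<le> t'"
  shows "nohit V E c v t' x \<le> nohit V E c v t x"
  using lift_Suc_antimono_le[of "\<lambda>t. nohit V E c v t x", OF nohit_Suc_le[OF assms(1,2)] assms(3)] .

lemma nohit_mult:
  assumes "walk_ok V E c" "\<forall>w\<in>V. nohit V E c v t w \<le> C" "0 \<le> C"
  shows "x \<in> V \<Longrightarrow> nohit V E c v (s + t) x \<le> nohit V E c v s x * C"
proof (induction s arbitrary: x)
  case 0 then show ?case using assms by (cases "x = v") auto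
next
  case (Suc s)
  show ?case
  proof (cases "x = v")
    case True then show ?thesis by simp
  next
    case False
    have "(\<Sum>w\<in>nbrs V E x. trans_prob V E c x w * nohit V E c v (s + t) w)
        \<le> (\<Sum>w\<in>nbrs V E x. trans_prob V E c x w * (nohit V E c v s w * C))"
    proof (rule sum_mono)
      fix w assume w: "w \<in> nbrs V E x"
      then have "nohit V E c v (s + t) w \<le> nohit V E c v s w * C" using Suc.IH nbrs_sub by blast
      then show "trans_prob V E c x w * nohit V E c v (s + t) w \<le> trans_prob V E c x w * (nohit V E c v s w * C)"
        using tp_pos[OF assms(1) Suc.prems w] by (simp add: mult_left_mono)
    qed
    also have "\<dots> = (\<Sum>w\<in>nbrs V E x. trans_prob V E c x w * nohit V E c v s w) * C"
      by (simp add: sum_distrib_right mult.assoc)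
    finally show ?thesis using False by simp
  qed
qed

lemma nohit_path:
  assumes "walk_ok V E c" "0 < q" "q \<le> 1" "\<forall>y\<in>V. \<forall>w. E y w \<longrightarrow> q \<le> trans_prob V E c y w"
  shows "(E ^^ k) x v \<Longrightarrow> x \<in> V \<Longrightarrow> nohit V E c v k x \<le> 1 - q ^ k"
proof (induction k arbitrary: x)
  case 0 then show ?case by simp
next
  case (Suc k)
  show ?case
  proof (cases "x = v")
    case True then show ?thesis using assms(2,3) power_le_one[of q "Suc k"] by simp
  next
    case False
    obtain y where y: "E x y" "(E ^^ k) y v" using relpowp_Suc_D2[OF Suc.prems(1)] by blast
    have sg: "simple_graph V E" using assms(1) walk_ok_def by blast
    have yV: "y \<in> V" using y sg simple_graph_def by blast
    have yn: "y \<in> nbrs V E x" using y yV by (simp add: nbrs_def)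
    have fin: "finite (nbrs V E x)" using nbrs_fin sg by blast
    have IH: "nohit V E c v k y \<le> 1 - q ^ k" using Suc.IH y(2) yV by blast
    have nb: "\<And>w. w \<in> nbrs V E x \<Longrightarrow> 0 \<le> trans_prob V E c x w * (1 - nohit V E c v k w)"
    proof -
      fix w assume w: "w \<in> nbrs V E x"
      then have "nohit V E c v k w \<le> 1" using nohit_bounds[OF assms(1)] nbrs_sub by blast
      then show "0 \<le> trans_prob V E c x w * (1 - nohit V E c v k w)"
        using tp_pos[OF assms(1) Suc.prems(2) w] by simp
    qed
    have "trans_prob V E c x y * (1 - nohit V E c v k y) \<le> (\<Sum>w\<in>nbrs V E x. trans_prob V E c x w * (1 - nohit V E c v k w))"
      by (rule member_le_sum[OF yn]) (use nb fin in auto)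
    also have "\<dots> = 1 - (\<Sum>w\<in>nbrs V E x. trans_prob V E c x w * nohit V E c v k w)"
      using tp_sum[OF assms(1) Suc.prems(2)] by (simp add: algebra_simps sum_subtractf)
    finally have A: "(\<Sum>w\<in>nbrs V E x. trans_prob V E c x w * nohit V E c v k w) \<le> 1 - trans_prob V E c x y * (1 - nohit V E c v k y)"
      by simp
    have "q * q ^ k \<le> trans_prob V E c x y * (1 - nohit V E c v k y)"
      by (rule mult_mono) (use assms(4) Suc.prems(2) y IH assms(2) tp_pos[OF assms(1) Suc.prems(2) yn] in auto)
    then show ?thesis using A False by simp
  qed
qed

lemma exists_q:
  assumes "walk_ok V E c"
  shows "\<exists>q>0. q \<le> 1 \<and> (\<forall>y\<in>V. \<forall>w. E y w \<longrightarrow> q \<le> trans_prob V E c y w)"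
proof -
  have sg: "simple_graph V E" using assms walk_ok_def by blast
  define P where "P = {p \<in> V \<times> V. E (fst p) (snd p)}"
  define S where "S = (\<lambda>p. trans_prob V E c (fst p) (snd p)) ` P"
  have finP: "finite P" using sg unfolding P_def simple_graph_def
    by (metis (no_types, lifting) finite_SigmaI finite_subset mem_Collect_eq subsetI)
  have finS: "finite S" using finP S_def by simp
  have Spos: "\<forall>a\<in>S. 0 < a"
  proof
    fix a assume "a \<in> S"
    then obtain y w where yw: "y \<in> V" "w \<in> V" "E y w" "a = trans_prob V E c y w"
      unfolding S_def P_def by auto
    then have "w \<in> nbrs V E y" by (simp add: nbrs_def)
    then show "0 < a" using tp_pos[OF assms yw(1)] yw(4) by simp
  qed
  show ?thesis
  proof (cases "S = {}")
    case True
    have "\<forall>y\<in>V. \<forall>w. E y w \<longrightarrow> False"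
    proof (intro ballI allI impI)
      fix y w assume "y \<in> V" "E y w"
      then have "(y, w) \<in> P" using sg unfolding P_def simple_graph_def by auto
      then show False using True S_def by auto
    qed
    then show ?thesis by (intro exI[of _ 1]) auto
  next
    case False
    have m: "0 < Min S" using Min_gr_iff[OF finS False] Spos by blast
    show ?thesis
    proof (intro exI[of _ "min 1 (Min S)"] conjI ballI allI impI)
      show "0 < min 1 (Min S)" using m by simp
      show "min 1 (Min S) \<le> 1" by simp
      fix y w assume "y \<in> V" "E y w"
      then have "(y, w) \<in> P" using sg unfolding P_def simple_graph_def by auto
      then have "trans_prob V E c y w \<in> S" unfolding S_def by force
      then have "Min S \<le> trans_prob V E c y w" using finS by simp
      then show "min 1 (Min S) \<le> trans_prob V E c y w" by simp
    qed
  qed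
qed

lemma nohit_summable:
  assumes ok: "walk_ok V E c" and con: "graph_connected V E" and vV: "v \<in> V" and xV: "x \<in> V"
  shows "summable (\<lambda>t. nohit V E c v t x)"
proof -
  obtain q where q: "0 < q" "q \<le> 1" "\<forall>y\<in>V. \<forall>w. E y w \<longrightarrow> q \<le> trans_prob V E c y w"
    using exists_q[OF ok] by blast
  have sg: "simple_graph V E" using ok walk_ok_def by blast
  have finV: "finite V" using sg simple_graph_def by blast
  have "\<forall>u\<in>V. \<exists>k. (E ^^ k) u v"
    using con vV rtranclp_imp_relpowp unfolding graph_connected_def by metis
  then obtain K where K: "\<forall>u\<in>V. (E ^^ K u) u v" by metis
  define N where "N = Suc (Max (K ` V))"
  have Npos: "0 < N" by (simp add: N_def)
  have KN: "\<forall>u\<in>V. K u \<le> N" using finV by (auto simp: N_def le_SucI)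
  define \<rho> where "\<rho> = 1 - q ^ N"
  have qN: "0 < q ^ N" "q ^ N \<le> 1" using q by (auto simp: power_le_one)
  have \<rho>: "0 \<le> \<rho>" "\<rho> < 1" using qN by (auto simp: \<rho>_def)
  have hN: "\<forall>u\<in>V. nohit V E c v N u \<le> \<rho>"
  proof
    fix u assume u: "u \<in> V"
    have "nohit V E c v N u \<le> nohit V E c v (K u) u"
      using nohit_antimono[OF ok u] KN u by blast
    also have "\<dots> \<le> 1 - q ^ (K u)" using nohit_path[OF ok q] K u by blast
    also have "\<dots> \<le> 1 - q ^ N" using power_decreasing[of "K u" N q] KN u q by simp
    finally show "nohit V E c v N u \<le> \<rho>" by (simp add: \<rho>_def)
  qed
  have hk: "\<forall>u\<in>V. nohit V E c v (k * N) u \<le> \<rho> ^ k" for k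
  proof (induction k)
    case 0 then show ?case using nohit_bounds[OF ok] by simp
  next
    case (Suc k)
    show ?case
    proof
      fix u assume u: "u \<in> V"
      have "nohit V E c v (Suc k * N) u = nohit V E c v (k * N + N) u" by (simp add: add.commute)
      also have "\<dots> \<le> nohit V E c v (k * N) u * \<rho>" using nohit_mult[OF ok hN \<rho>(1) u] .
      also have "\<dots> \<le> \<rho> ^ k * \<rho>" using Suc u \<rho>(1) by (simp add: mult_right_mono)
      finally show "nohit V E c v (Suc k * N) u \<le> \<rho> ^ Suc k" by (simp add: mult.commute)
    qed
  qed
  define \<rho>' where "\<rho>' = (1 + \<rho>) / 2"
  have \<rho>': "0 < \<rho>'" "\<rho>' < 1" "\<rho> \<le> \<rho>'" using \<rho> by (auto simp: \<rho>'_def)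
  define \<eta> where "\<eta> = root N \<rho>'"
  have \<eta>: "0 < \<eta>" "\<eta> < 1" "\<eta> ^ N = \<rho>'"
    using \<rho>' Npos by (auto simp: \<eta>_def real_root_gt_zero real_root_lt_1_iff real_root_pow_pos2)
  have bound: "norm (nohit V E c v t x) \<le> \<eta> ^ t / \<eta> ^ N" for t
  proof -
    have "nohit V E c v t x \<le> nohit V E c v ((t div N) * N) x"
      using nohit_antimono[OF ok xV] by (simp add: div_times_less_eq_dividend)
    also have "\<dots> \<le> \<rho> ^ (t div N)" using hk xV by blast
    also have "\<dots> \<le> \<rho>' ^ (t div N)" using \<rho> \<rho>' by (simp add: power_mono)
    also have "\<dots> = \<eta> ^ (N * (t div N))" using \<eta> by (simp add: power_mult)
    also have "\<dots> = \<eta> ^ (N * (t div N) + N) / \<eta> ^ N" using \<eta> \<rho>' by (simp add: power_add)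
    also have "\<dots> \<le> \<eta> ^ t / \<eta> ^ N"
    proof -
      have "t \<le> N * (t div N) + N"
        by (metis Npos add.commute add_le_cancel_left div_mult_mod_eq less_imp_le_nat mod_less_divisor mult.commute)
      then have "\<eta> ^ (N * (t div N) + N) \<le> \<eta> ^ t" using \<eta> by (simp add: power_decreasing)
      then show ?thesis by (rule divide_right_mono) (use \<eta> \<rho>' in simp)
    qed
    finally show ?thesis using nohit_bounds[OF ok xV] by simp
  qed
  have "summable (\<lambda>t. \<eta> ^ t / \<eta> ^ N)"
    using \<eta> by (intro summable_divide summable_geometric) simp
  then show ?thesis using bound by (rule summable_comparison_test') 
qed

lemma hitting_nonneg:
  assumes ok: "walk_ok V E c" and con: "graph_connected V E" and "v \<in> V" "x \<in> V"
  shows "0 \<le> hitting_time V E c x v"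
  unfolding hitting_time_def
  using nohit_summable[OF assms] nohit_bounds[OF ok assms(4)] by (simp add: suminf_nonneg)

lemma P_form:
  assumes ok: "walk_ok V E c" and yV: "y \<in> V"
    and sub: "(\<Sum>w\<in>nbrs V E y. c y w * (\<psi> y - \<psi> w)) \<le> (\<Sum>w\<in>nbrs V E y. c y w)"
  shows "\<psi> y \<le> 1 + (\<Sum>w\<in>nbrs V E y. trans_prob V E c y w * \<psi> w)"
proof -
  define C where "C = (\<Sum>w\<in>nbrs V E y. c y w)"
  have C: "0 < C" using csum_pos[OF ok yV] C_def by simp
  have "(\<Sum>w\<in>nbrs V E y. c y w * (\<psi> y - \<psi> w)) = \<psi> y * C - (\<Sum>w\<in>nbrs V E y. c y w * \<psi> w)"
    by (simp add: C_def algebra_simps sum_subtractf sum_distrib_left)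
  then have "\<psi> y * C \<le> C + (\<Sum>w\<in>nbrs V E y. c y w * \<psi> w)" using sub C_def by simp
  then have "\<psi> y \<le> (C + (\<Sum>w\<in>nbrs V E y. c y w * \<psi> w)) / C" using C by (simp add: field_simps)
  also have "\<dots> = 1 + (\<Sum>w\<in>nbrs V E y. c y w * \<psi> w) / C" using C by (simp add: field_simps)
  also have "(\<Sum>w\<in>nbrs V E y. c y w * \<psi> w) / C = (\<Sum>w\<in>nbrs V E y. trans_prob V E c y w * \<psi> w)"
    by (simp add: trans_prob_def C_def sum_divide_distrib)
  finally show ?thesis .
qed

lemma hit_lower:
  assumes ok: "walk_ok V E c" and con: "graph_connected V E" and vV: "v \<in> V"
    and psiv: "\<psi> v \<le> 0"
    and sub: "\<forall>y\<in>V. y \<noteq> v \<longrightarrow> 0 < \<psi> y \<longrightarrow>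
        (\<Sum>w\<in>nbrs V E y. c y w * (\<psi> y - \<psi> w)) \<le> (\<Sum>w\<in>nbrs V E y. c y w)"
    and xV: "x \<in> V"
  shows "\<psi> x \<le> hitting_time V E c x v"
proof -
  have sg: "simple_graph V E" using ok walk_ok_def by blast
  have finV: "finite V" using sg simple_graph_def by blast
  define Bd where "Bd = max 0 (Max (\<psi> ` V))"
  have Bd0: "0 \<le> Bd" by (simp add: Bd_def)
  have Bdp: "\<psi> y \<le> Bd" if "y \<in> V" for y
    using that finV by (auto simp: Bd_def intro: le_max_iff_disj[THEN iffD2] Max_ge)
  define S where "S t y = (\<Sum>s<t. nohit V E c v s y)" for t y
  have S0: "0 \<le> S t y" if "y \<in> V" for t y
    unfolding S_def by (rule sum_nonneg) (use nohit_bounds[OF ok that] in auto)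
  have claim: "\<forall>y\<in>V. \<psi> y - S t y \<le> Bd * nohit V E c v t y" for t
  proof (induction t)
    case 0
    show ?case
    proof
      fix y assume y: "y \<in> V"
      show "\<psi> y - S 0 y \<le> Bd * nohit V E c v 0 y"
        using Bdp[OF y] psiv by (cases "y = v") (auto simp: S_def)
    qed
  next
    case (Suc t)
    show ?case
    proof
      fix y assume y: "y \<in> V"
      show "\<psi> y - S (Suc t) y \<le> Bd * nohit V E c v (Suc t) y"
      proof (cases "y = v \<or> \<psi> y \<le> 0")
        case True
        then have "\<psi> y \<le> 0" using psiv by auto
        then show ?thesis using S0[OF y, of "Suc t"] nohit_bounds[OF ok y, of v "Suc t"] Bd0
          by (smt (verit) mult_nonneg_nonneg)
      next
        case False
        then have yv: "y \<noteq> v" and yp: "0 < \<psi> y" by auto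
        have P1: "\<psi> y \<le> 1 + (\<Sum>w\<in>nbrs V E y. trans_prob V E c y w * \<psi> w)"
          using P_form[OF ok y] sub y yv yp by blast
        have "S (Suc t) y = 1 + (\<Sum>s<t. nohit V E c v (Suc s) y)"
          unfolding S_def sum.lessThan_Suc_shift using yv by simp
        also have "(\<Sum>s<t. nohit V E c v (Suc s) y) = (\<Sum>s<t. \<Sum>w\<in>nbrs V E y. trans_prob V E c y w * nohit V E c v s w)"
          using yv by simp
        also have "\<dots> = (\<Sum>w\<in>nbrs V E y. trans_prob V E c y w * S t w)"
          by (simp add: S_def sum_distrib_left sum.swap[of _ "{..<t}"])
        finally have SS: "S (Suc t) y = 1 + (\<Sum>w\<in>nbrs V E y. trans_prob V E c y w * S t w)" .
        have "\<psi> y - S (Suc t) y \<le> (\<Sum>w\<in>nbrs V E y. trans_prob V E c y w * (\<psi> w - S t w))"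
          using P1 SS by (simp add: algebra_simps sum_subtractf)
        also have "\<dots> \<le> (\<Sum>w\<in>nbrs V E y. trans_prob V E c y w * (Bd * nohit V E c v t w))"
        proof (rule sum_mono)
          fix w assume w: "w \<in> nbrs V E y"
          then have "\<psi> w - S t w \<le> Bd * nohit V E c v t w" using Suc nbrs_sub by blast
          then show "trans_prob V E c y w * (\<psi> w - S t w) \<le> trans_prob V E c y w * (Bd * nohit V E c v t w)"
            using tp_pos[OF ok y w] by (simp add: mult_left_mono)
        qed
        also have "\<dots> = Bd * nohit V E c v (Suc t) y"
          using yv by (simp add: sum_distrib_left algebra_simps)
        finally show ?thesis .
      qed
    qed
  qed
  have summ: "summable (\<lambda>t. nohit V E c v t x)" using nohit_summable[OF ok con vV xV] .
  have le: "\<psi> x - Bd * nohit V E c v t x \<le> hitting_time V E c x v" for t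
  proof -
    have "S t x \<le> hitting_time V E c x v"
      unfolding S_def hitting_time_def
      by (rule sum_le_suminf[OF summ]) (use nohit_bounds[OF ok xV] in auto)
    then show ?thesis using claim[of t] xV by fastforce
  qed
  have lim: "(\<lambda>t. \<psi> x - Bd * nohit V E c v t x) \<longlonglongrightarrow> \<psi> x - Bd * 0"
    by (intro tendsto_intros summable_LIMSEQ_zero[OF summ])
  show ?thesis using LIMSEQ_le_const2[OF lim] le by simp
qed


lemma cyc_gt:
  assumes finV: "finite V" and ne: "V \<noteq> {}"
    and all: "\<forall>xs. distinct xs \<and> set xs = V \<longrightarrow> R < cyc_sum V E c xs"
  shows "R < cyclic_cover_time V E c"
proof -
  define A where "A = {cyc_sum V E c xs | xs. distinct xs \<and> set xs = V}"
  have "A \<subseteq> cyc_sum V E c ` {xs. set xs \<subseteq> V \<and> distinct xs}" unfolding A_def by auto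
  moreover have "finite (cyc_sum V E c ` {xs. set xs \<subseteq> V \<and> distinct xs})"
    using finite_subset_distinct[OF finV] by simp
  ultimately have finA: "finite A" by (rule finite_subset)
  obtain xs where "set xs = V" "distinct xs" using finite_distinct_list[OF finV] by blast
  then have neA: "A \<noteq> {}" unfolding A_def by auto
  have "Min A \<in> A" using Min_in[OF finA neA] .
  then obtain ys where "distinct ys" "set ys = V" "Min A = cyc_sum V E c ys" unfolding A_def by auto
  then show ?thesis using all by (simp add: cyclic_cover_time_def A_def[symmetric])
qed

lemma enter_index:
  assumes "set xs = V" "S \<subseteq> V" "S \<noteq> {}" "x0 \<in> V" "x0 \<notin> S"
  shows "\<exists>k<length xs. xs ! k \<notin> S \<and> xs ! ((k + 1) mod length xs) \<in> S"
proof (rule ccontr)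
  assume H: "\<not> ?thesis"
  define n where "n = length xs"
  obtain k0 where k0: "k0 < n" "xs ! k0 = x0" using assms(1,4) by (metis in_set_conv_nth n_def)
  have n0: "0 < n" using k0 by simp
  have all: "xs ! ((k0 + m) mod n) \<notin> S" for m
  proof (induction m)
    case 0 then show ?case using k0 assms(5) by simp
  next
    case (Suc m)
    have "(k0 + m) mod n < n" using n0 by simp
    then have "xs ! (((k0 + m) mod n + 1) mod n) \<notin> S" using H Suc n_def by blast
    moreover have "((k0 + m) mod n + 1) mod n = (k0 + Suc m) mod n" by (simp add: mod_Suc_eq)
    ultimately show ?case by simp
  qed
  obtain y where "y \<in> S" using assms(3) by blast
  then obtain i where i: "i < n" "xs ! i = y" using assms(1,2) n_def by (metis in_set_conv_nth subsetD)
  have "(k0 + (i + n - k0)) mod n = i" using k0 i by simp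
  then have "xs ! i \<notin> S" using all[of "i + n - k0"] by simp
  then show False using i \<open>y \<in> S\<close> by simp
qed

lemma cyc_T1:
  assumes ok: "walk_ok V E c" and con: "graph_connected V E"
    and xs: "distinct xs" "set xs = V"
    and finJ: "finite J"
    and S: "\<forall>j\<in>J. S j \<subseteq> V \<and> S j \<noteq> {} \<and> (\<exists>x\<in>V. x \<notin> S j)"
    and disj: "\<forall>i\<in>J. \<forall>j\<in>J. i \<noteq> j \<longrightarrow> S i \<inter> S j = {}"
    and H: "\<forall>j\<in>J. \<forall>x\<in>V. \<forall>y\<in>S j. x \<notin> S j \<longrightarrow> m \<le> hitting_time V E c x y"
  shows "real (card J) * m \<le> cyc_sum V E c xs"
proof -
  define n where "n = length xs"
  have ex: "\<forall>j\<in>J. \<exists>k<n. xs ! k \<notin> S j \<and> xs ! ((k + 1) mod n) \<in> S j"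
  proof
    fix j assume j: "j \<in> J"
    then obtain x0 where "x0 \<in> V" "x0 \<notin> S j" "S j \<subseteq> V" "S j \<noteq> {}" using S by blast
    then show "\<exists>k<n. xs ! k \<notin> S j \<and> xs ! ((k + 1) mod n) \<in> S j"
      unfolding n_def by (rule enter_index[OF xs(2), rotated 2])
  qed
  obtain k where k: "\<forall>j\<in>J. k j < n \<and> xs ! (k j) \<notin> S j \<and> xs ! ((k j + 1) mod n) \<in> S j"
    using bchoice[OF ex] by auto
  have inj: "inj_on k J"
  proof
    fix i j assume ij: "i \<in> J" "j \<in> J" "k i = k j"
    then have "xs ! ((k i + 1) mod n) \<in> S i \<inter> S j" using k by auto
    then show "i = j" using disj ij(1,2) by auto
  qed
  define h where "h i = hitting_time V E c (xs ! i) (xs ! ((i + 1) mod n))" for i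
  have inV: "i < n \<Longrightarrow> xs ! i \<in> V" for i using xs(2) n_def by auto
  have h0: "0 \<le> h i" if "i < n" for i
  proof -
    have "(i + 1) mod n < n" using that by simp
    then have "xs ! ((i + 1) mod n) \<in> V" by (rule inV)
    then show ?thesis unfolding h_def using hitting_nonneg[OF ok con _ inV[OF that]] by blast
  qed
  have "(\<Sum>j\<in>J. m) \<le> (\<Sum>j\<in>J. h (k j))"
  proof (rule sum_mono)
    fix j assume j: "j \<in> J"
    then have kj: "k j < n" "xs ! (k j) \<notin> S j" "xs ! ((k j + 1) mod n) \<in> S j" using k by auto
    have "xs ! (k j) \<in> V" using kj(1) by (rule inV)
    then show "m \<le> h (k j)" unfolding h_def using H j kj(2,3) by blast
  qed
  also have "(\<Sum>j\<in>J. h (k j)) = (\<Sum>i\<in>k ` J. h i)" by (rule sum.reindex[OF inj, unfolded comp_def, symmetric])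
  also have "\<dots> \<le> (\<Sum>i<n. h i)"
  proof (rule sum_mono2)
    show "finite {..<n}" by simp
    show "k ` J \<subseteq> {..<n}" using k by auto
    show "\<And>b. b \<in> {..<n} - k ` J \<Longrightarrow> 0 \<le> h b" using h0 by simp
  qed
  also have "\<dots> = cyc_sum V E c xs" by (simp add: cyc_sum_def h_def n_def)
  finally show ?thesis by simp
qed
lemma hit_diff:
  assumes ok: "walk_ok V E c" and con: "graph_connected V E"
    and nn: "\<forall>y\<in>V. 0 \<le> \<psi> y"
    and sub: "\<forall>y\<in>V. 0 < \<psi> y \<longrightarrow>
        (\<Sum>w\<in>nbrs V E y. c y w * (\<psi> y - \<psi> w)) \<le> (\<Sum>w\<in>nbrs V E y. c y w)"
    and yV: "y \<in> V" and zV: "z \<in> V"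
  shows "\<psi> y - \<psi> z \<le> hitting_time V E c y z"
proof -
  have "(\<lambda>u. \<psi> u - \<psi> z) y \<le> hitting_time V E c y z"
  proof (rule hit_lower[OF ok con zV _ _ yV])
    show "\<psi> z - \<psi> z \<le> 0" by simp
    show "\<forall>y\<in>V. y \<noteq> z \<longrightarrow> 0 < \<psi> y - \<psi> z \<longrightarrow>
        (\<Sum>w\<in>nbrs V E y. c y w * (\<psi> y - \<psi> z - (\<psi> w - \<psi> z))) \<le> (\<Sum>w\<in>nbrs V E y. c y w)"
    proof (intro ballI impI)
      fix u assume u: "u \<in> V" "0 < \<psi> u - \<psi> z"
      then have "0 < \<psi> u" using nn zV by fastforce
      then show "(\<Sum>w\<in>nbrs V E u. c u w * (\<psi> u - \<psi> z - (\<psi> w - \<psi> z))) \<le> (\<Sum>w\<in>nbrs V E u. c u w)"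
        using sub u by simp
    qed
  qed
  then show ?thesis by simp
qed

lemma cyc_T2:
  assumes ok: "walk_ok V E c" and con: "graph_connected V E"
    and nn: "\<forall>y\<in>V. 0 \<le> \<psi> y"
    and sub: "\<forall>y\<in>V. 0 < \<psi> y \<longrightarrow>
        (\<Sum>w\<in>nbrs V E y. c y w * (\<psi> y - \<psi> w)) \<le> (\<Sum>w\<in>nbrs V E y. c y w)"
    and xs: "distinct xs" "set xs = V"
    and uV: "u \<in> V" and vV: "v \<in> V"
  shows "\<psi> u - \<psi> v \<le> cyc_sum V E c xs"
proof -
  define n where "n = length xs"
  define g where "g k = \<psi> (xs ! k)" for k
  define h where "h i = hitting_time V E c (xs ! i) (xs ! ((i + 1) mod n))" for i
  have inV: "i < n \<Longrightarrow> xs ! i \<in> V" for i using xs(2) n_def by auto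
  have h0: "0 \<le> h i" if "i < n" for i
  proof -
    have "(i + 1) mod n < n" using that by simp
    then show ?thesis unfolding h_def using hitting_nonneg[OF ok con] inV that by blast
  qed
  have hg: "g i - g ((i + 1) mod n) \<le> h i" if "i < n" for i
  proof -
    have "(i + 1) mod n < n" using that by simp
    then show ?thesis unfolding h_def g_def using hit_diff[OF ok con nn sub] inV that by blast
  qed
  have cs: "cyc_sum V E c xs = (\<Sum>i<n. h i)" by (simp add: cyc_sum_def h_def n_def)
  obtain i where i: "i < n" "xs ! i = u" using uV xs(2) n_def by (metis in_set_conv_nth)
  obtain j where j: "j < n" "xs ! j = v" using vV xs(2) n_def by (metis in_set_conv_nth)
  have seg: "g a - g b \<le> (\<Sum>k\<in>{a..<b}. h k)" if "a \<le> b" "b < n" for a b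
  proof -
    have "(\<Sum>k\<in>{a..<b}. h k) \<ge> (\<Sum>k\<in>{a..<b}. g k - g (Suc k))"
    proof (rule sum_mono)
      fix k assume "k \<in> {a..<b}"
      then have "k < n" "(k + 1) mod n = Suc k" using that by auto
      then show "g k - g (Suc k) \<le> h k" using hg[of k] by simp
    qed
    moreover have "(\<Sum>k\<in>{a..<b}. g k - g (Suc k)) = g a - g b"
      using sum_Suc_diff'[OF that(1), of g] by (simp add: sum_subtractf)
    ultimately show ?thesis by simp
  qed
  show ?thesis
  proof (cases "i \<le> j")
    case True
    have "(\<Sum>k\<in>{i..<j}. h k) \<le> (\<Sum>k<n. h k)"
      by (rule sum_mono2) (use j h0 in auto)
    then show ?thesis using seg[OF True j(1)] cs i j g_def by simp
  next
    case False
    define m where "m = n - 1"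
    have nm: "n = Suc m" using i m_def by simp
    have im: "i \<le> m" using i nm by simp
    have A: "g 0 - g j \<le> (\<Sum>k\<in>{0..<j}. h k)" using seg[of 0 j] j by simp
    have B: "g i - g m \<le> (\<Sum>k\<in>{i..<m}. h k)" using seg[OF im] nm by simp
    have C: "g m - g 0 \<le> h m" using hg[of m] nm by simp
    have "(\<Sum>k\<in>{i..<n}. h k) = (\<Sum>k\<in>{i..<m}. h k) + h m" using nm im by simp
    moreover have "(\<Sum>k\<in>{0..<j} \<union> {i..<n}. h k) = (\<Sum>k\<in>{0..<j}. h k) + (\<Sum>k\<in>{i..<n}. h k)"
      by (rule sum.union_disjoint) (use False in auto)
    moreover have "(\<Sum>k\<in>{0..<j} \<union> {i..<n}. h k) \<le> (\<Sum>k<n. h k)"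
      by (rule sum_mono2) (use j h0 in auto)
    ultimately show ?thesis using A B C cs i j g_def by simp
  qed
qed

definition enc :: "nat \<times> nat \<times> nat \<Rightarrow> nat" where
  "enc x = prod_encode (fst x, prod_encode (snd x))"
definition dec :: "nat \<Rightarrow> nat \<times> nat \<times> nat" where
  "dec u = (fst (prod_decode u), prod_decode (snd (prod_decode u)))"

lemma dec_enc[simp]: "dec (enc x) = x"
  by (simp add: enc_def dec_def prod_encode_inverse)

lemma enc_dec[simp]: "enc (dec u) = u"
  by (simp add: enc_def dec_def prod_decode_inverse)

lemma inj_enc: "inj enc"
  by (metis dec_enc injI)

definition gV :: "(nat \<times> nat \<times> nat) set \<Rightarrow> nat set" where "gV V' = enc ` V'"
definition gE :: "(nat \<times> nat \<times> nat) set \<Rightarrow> (nat \<times> nat \<times> nat \<Rightarrow> nat \<times> nat \<times> nat \<Rightarrow> bool) \<Rightarrow> nat \<Rightarrow> nat \<Rightarrow> bool" where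
  "gE V' E' u v \<longleftrightarrow> dec u \<in> V' \<and> dec v \<in> V' \<and> E' (dec u) (dec v)"
definition N' :: "(nat \<times> nat \<times> nat) set \<Rightarrow> (nat \<times> nat \<times> nat \<Rightarrow> nat \<times> nat \<times> nat \<Rightarrow> bool) \<Rightarrow> nat \<times> nat \<times> nat \<Rightarrow> (nat \<times> nat \<times> nat) set" where
  "N' V' E' x = {y \<in> V'. E' x y}"

lemma gE_enc[simp]: "gE V' E' (enc x) (enc y) \<longleftrightarrow> x \<in> V' \<and> y \<in> V' \<and> E' x y"
  by (simp add: gE_def)

lemma enc_in_gV[simp]: "enc x \<in> gV V' \<longleftrightarrow> x \<in> V'"
  by (auto simp: gV_def dest: injD[OF inj_enc])

lemma card_gV: "card (gV V') = card V'"
  unfolding gV_def by (rule card_image) (meson inj_enc inj_on_subset subset_UNIV)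

lemma simple_enc:
  assumes "finite V'" "\<forall>x y. E' x y \<longrightarrow> E' y x" "\<forall>x. \<not> E' x x"
  shows "simple_graph (gV V') (gE V' E')"
  unfolding simple_graph_def
proof (intro conjI allI impI)
  show "finite (gV V')" using assms(1) by (simp add: gV_def)
  fix u v assume "gE V' E' u v"
  then have h: "dec u \<in> V'" "dec v \<in> V'" "E' (dec u) (dec v)" by (auto simp: gE_def)
  show "u \<in> gV V'" using h(1) enc_in_gV[of "dec u" V'] by simp
  show "v \<in> gV V'" using h(2) enc_in_gV[of "dec v" V'] by simp
  show "u \<noteq> v" using h(3) assms(3) by metis
  show "gE V' E' v u" using h assms(2)[rule_format, OF h(3)] by (simp add: gE_def)
qed

lemma nbrs_enc:
  "nbrs (gV V') (gE V' E') (enc x) = enc ` N' V' E' x" if "x \<in> V'"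
proof -
  have "nbrs (gV V') (gE V' E') (enc x) = {u \<in> enc ` V'. dec u \<in> V' \<and> E' x (dec u)}"
    using that by (auto simp: nbrs_def gV_def gE_def)
  also have "\<dots> = enc ` N' V' E' x" by (auto simp: N'_def)
  finally show ?thesis .
qed

lemma deg_enc:
  "deg (gV V') (gE V' E') (enc x) = card (N' V' E' x)" if "x \<in> V'"
  unfolding deg_def nbrs_enc[OF that]
  by (rule card_image) (meson inj_enc inj_on_subset subset_UNIV)

lemma sum_enc:
  "(\<Sum>w\<in>nbrs (gV V') (gE V' E') (enc x). F w) = (\<Sum>y\<in>N' V' E' x. F (enc y))" if "x \<in> V'"
  unfolding nbrs_enc[OF that]
  by (rule sum.reindex[unfolded comp_def]) (meson inj_enc inj_on_subset subset_UNIV)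

lemma N'_sub: "N' V' E' x \<subseteq> V'" by (auto simp: N'_def)

lemma connected_enc:
  assumes ne: "h \<in> V'" and reach: "\<forall>x\<in>V'. E'\<^sup>*\<^sup>* h x"
    and sym: "\<forall>x y. E' x y \<longrightarrow> E' y x" and inV: "\<forall>x y. E' x y \<longrightarrow> x \<in> V' \<and> y \<in> V'"
  shows "graph_connected (gV V') (gE V' E')"
proof -
  have fw: "(gE V' E')\<^sup>*\<^sup>* (enc x) (enc y)" if "E'\<^sup>*\<^sup>* x y" for x y
    using that
  proof (induction rule: rtranclp_induct)
    case base then show ?case by simp
  next
    case (step y z)
    then have "gE V' E' (enc y) (enc z)" using inV[rule_format, OF step(2)] by simp
    then show ?case using step(3) by (simp add: rtranclp.rtrancl_into_rtrancl)
  qed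
  have bw: "(gE V' E')\<^sup>*\<^sup>* (enc y) (enc x)" if "E'\<^sup>*\<^sup>* x y" for x y
    using that
  proof (induction rule: rtranclp_induct)
    case base then show ?case by simp
  next
    case (step y z)
    then have "gE V' E' (enc z) (enc y)" using inV[rule_format, OF step(2)] sym[rule_format, OF step(2)] by simp
    then show ?case using step(3) by (rule converse_rtranclp_into_rtranclp)
  qed
  show ?thesis unfolding graph_connected_def
  proof (intro conjI ballI)
    show "gV V' \<noteq> {}" using ne by (auto simp: gV_def)
    fix u v assume "u \<in> gV V'" "v \<in> gV V'"
    then obtain x y where xy: "x \<in> V'" "y \<in> V'" "u = enc x" "v = enc y" by (auto simp: gV_def)
    have "(gE V' E')\<^sup>*\<^sup>* (enc x) (enc h)" using bw reach xy by blast
    moreover have "(gE V' E')\<^sup>*\<^sup>* (enc h) (enc y)" using fw reach xy by blast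
    ultimately show "(gE V' E')\<^sup>*\<^sup>* u v" using xy by (simp add: rtranclp_trans)
  qed
qed

lemma walk_ok_enc:
  assumes fin: "finite V'" and sym: "\<forall>x y. E' x y \<longrightarrow> E' y x" and irr: "\<forall>x. \<not> E' x x"
    and nz: "\<forall>x\<in>V'. N' V' E' x \<noteq> {}"
    and pos: "\<forall>a b. 1 \<le> a \<longrightarrow> 1 \<le> b \<longrightarrow> 0 < f a b"
  shows "walk_ok (gV V') (gE V' E') (local_cond f (gV V') (gE V' E'))"
  unfolding walk_ok_def
proof (intro conjI ballI allI impI)
  have sg: "simple_graph (gV V') (gE V' E')" by (rule simple_enc[OF fin sym irr])
  then show "simple_graph (gV V') (gE V' E')" .
  fix u assume "u \<in> gV V'"
  then obtain x where x: "x \<in> V'" "u = enc x" by (auto simp: gV_def)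
  show "nbrs (gV V') (gE V' E') u \<noteq> {}" using x nz nbrs_enc[OF x(1)] by simp
next
  fix u v assume e: "gE V' E' u v"
  have sg: "simple_graph (gV V') (gE V' E')" by (rule simple_enc[OF fin sym irr])
  have fin2: "finite (nbrs (gV V') (gE V' E') w)" for w using nbrs_fin[OF sg] .
  have "v \<in> nbrs (gV V') (gE V' E') u" using e sg by (auto simp: nbrs_def simple_graph_def)
  then have du: "1 \<le> deg (gV V') (gE V' E') u" using fin2[of u] unfolding deg_def
    by (metis One_nat_def Suc_leI card_gt_0_iff empty_iff)
  have "u \<in> nbrs (gV V') (gE V' E') v" using e sg by (auto simp: nbrs_def simple_graph_def)
  then have dv: "1 \<le> deg (gV V') (gE V' E') v" using fin2[of v] unfolding deg_def
    by (metis One_nat_def Suc_leI card_gt_0_iff empty_iff)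
  show "0 < local_cond f (gV V') (gE V' E') u v" using pos du dv by (simp add: local_cond_def)
qed

lemma sub_enc:
  assumes x: "x \<in> V'"
    and h: "(\<Sum>y\<in>N' V' E' x. f (card (N' V' E' x)) (card (N' V' E' y)) * (\<psi> x - \<psi> y))
           \<le> (\<Sum>y\<in>N' V' E' x. f (card (N' V' E' x)) (card (N' V' E' y)))"
  shows "(\<Sum>w\<in>nbrs (gV V') (gE V' E') (enc x). local_cond f (gV V') (gE V' E') (enc x) w * (\<psi> (dec (enc x)) - \<psi> (dec w)))
        \<le> (\<Sum>w\<in>nbrs (gV V') (gE V' E') (enc x). local_cond f (gV V') (gE V' E') (enc x) w)"
proof -
  have eq1: "(\<Sum>w\<in>nbrs (gV V') (gE V' E') (enc x). local_cond f (gV V') (gE V' E') (enc x) w * (\<psi> (dec (enc x)) - \<psi> (dec w)))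
     = (\<Sum>y\<in>N' V' E' x. f (card (N' V' E' x)) (card (N' V' E' y)) * (\<psi> x - \<psi> y))"
    unfolding sum_enc[OF x]
  proof (rule sum.cong)
    fix y assume "y \<in> N' V' E' x"
    then have "y \<in> V'" using N'_sub by blast
    then show "local_cond f (gV V') (gE V' E') (enc x) (enc y) * (\<psi> (dec (enc x)) - \<psi> (dec (enc y)))
      = f (card (N' V' E' x)) (card (N' V' E' y)) * (\<psi> x - \<psi> y)"
      using x by (simp add: local_cond_def deg_enc)
  qed simp
  have eq2: "(\<Sum>w\<in>nbrs (gV V') (gE V' E') (enc x). local_cond f (gV V') (gE V' E') (enc x) w)
     = (\<Sum>y\<in>N' V' E' x. f (card (N' V' E' x)) (card (N' V' E' y)))"
    unfolding sum_enc[OF x]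
  proof (rule sum.cong)
    fix y assume "y \<in> N' V' E' x"
    then have "y \<in> V'" using N'_sub by blast
    then show "local_cond f (gV V') (gE V' E') (enc x) (enc y)
      = f (card (N' V' E' x)) (card (N' V' E' y))"
      using x by (simp add: local_cond_def deg_enc)
  qed simp
  show ?thesis using h eq1 eq2 by simp
qed

lemma rhs_nn:
  assumes fin: "finite V'" and nz: "\<forall>x\<in>V'. N' V' E' x \<noteq> {}" and x: "x \<in> V'"
    and pos: "\<forall>a b. 1 \<le> a \<longrightarrow> 1 \<le> b \<longrightarrow> 0 < (f::nat\<Rightarrow>nat\<Rightarrow>real) a b"
  shows "0 \<le> (\<Sum>y\<in>N' V' E' x. f (card (N' V' E' x)) (card (N' V' E' y)))"
proof (rule sum_nonneg)
  have d: "1 \<le> card (N' V' E' z)" if "z \<in> V'" for z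
  proof -
    have "finite (N' V' E' z)" using fin N'_sub finite_subset by metis
    then show ?thesis using nz that by (simp add: Suc_leI card_gt_0_iff)
  qed
  fix y assume "y \<in> N' V' E' x"
  then have "y \<in> V'" using N'_sub by blast
  then show "0 \<le> f (card (N' V' E' x)) (card (N' V' E' y))" using pos d x by (simp add: less_imp_le)
qed

lemma const_nbrs:
  fixes F \<psi> :: "nat \<times> nat \<times> nat \<Rightarrow> real"
  assumes "\<forall>y\<in>N' V' E' x. \<psi> y = \<psi> x"
    and "0 \<le> (\<Sum>y\<in>N' V' E' x. F y)"
  shows "(\<Sum>y\<in>N' V' E' x. F y * (\<psi> x - \<psi> y)) \<le> (\<Sum>y\<in>N' V' E' x. F y)"
proof -
  have "(\<Sum>y\<in>N' V' E' x. F y * (\<psi> x - \<psi> y)) = (\<Sum>y\<in>N' V' E' x. 0)"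
    by (rule sum.cong) (use assms(1) in auto)
  then show ?thesis using assms(2) by simp
qed

definition VU :: "nat \<Rightarrow> nat \<Rightarrow> nat \<Rightarrow> (nat \<times> nat \<times> nat) set" where
  "VU L a b = {(0,0,0)} \<union> (\<lambda>i. (1,i,0)) ` {1..L} \<union> (\<lambda>j. (2,j,0)) ` {..<a-1} \<union> (\<lambda>j. (3,j,0)) ` {..<b}"

definition DU :: "nat \<Rightarrow> nat \<Rightarrow> nat \<Rightarrow> nat \<times> nat \<times> nat \<Rightarrow> nat \<times> nat \<times> nat \<Rightarrow> bool" where
  "DU L a b x y \<longleftrightarrow> (x = (0,0,0) \<and> y = (1,1,0) \<and> 1 \<le> L) \<or> (\<exists>i. 1 \<le> i \<and> i < L \<and> x = (1,i,0) \<and> y = (1,Suc i,0))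
     \<or> (\<exists>j<b. x = (0,0,0) \<and> y = (3,j,0)) \<or> (\<exists>i<a-1. \<exists>j<b. x = (2,i,0) \<and> y = (3,j,0))"

definition EU :: "nat \<Rightarrow> nat \<Rightarrow> nat \<Rightarrow> nat \<times> nat \<times> nat \<Rightarrow> nat \<times> nat \<times> nat \<Rightarrow> bool" where
  "EU L a b x y \<longleftrightarrow> DU L a b x y \<or> DU L a b y x"

definition lamU :: "(nat \<Rightarrow> nat \<Rightarrow> real) \<Rightarrow> nat \<Rightarrow> nat \<Rightarrow> real" where
  "lamU f a b = real b * (f a (Suc b) + real (a-1) * f a b) / f 2 2"
definition kapU :: "(nat \<Rightarrow> nat \<Rightarrow> real) \<Rightarrow> nat \<Rightarrow> nat \<Rightarrow> real" where
  "kapU f a b = lamU f a b * f 2 2 / f 2 (Suc b)"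
definition nuU :: "(nat \<Rightarrow> nat \<Rightarrow> real) \<Rightarrow> nat \<Rightarrow> nat \<Rightarrow> real" where
  "nuU f a b = real (a-1) * f a b / f a (Suc b)"
definition ZU :: "(nat \<Rightarrow> nat \<Rightarrow> real) \<Rightarrow> nat \<Rightarrow> nat \<Rightarrow> nat \<Rightarrow> real" where
  "ZU f L a b = lamU f a b * (real L - 2) + kapU f a b"
definition psiU :: "(nat \<Rightarrow> nat \<Rightarrow> real) \<Rightarrow> nat \<Rightarrow> nat \<Rightarrow> nat \<Rightarrow> nat \<times> nat \<times> nat \<Rightarrow> real" where
  "psiU f L a b x = (case x of (t,i,j) \<Rightarrow> if t = 0 then ZU f L a b else if t = 1 then lamU f a b * real (L - 1 - i)
     else if t = 2 then ZU f L a b + nuU f a b + 1 else ZU f L a b + nuU f a b)"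

context
  fixes L a b :: nat
  assumes L3: "3 \<le> L" and a1: "1 \<le> a" and b1: "1 \<le> b"
begin

lemma mem_VU: "(t,i,j) \<in> VU L a b \<longleftrightarrow> (t=0 \<and> i=0 \<and> j=0) \<or> (t=1 \<and> 1\<le>i \<and> i\<le>L \<and> j=0) \<or> (t=2 \<and> i<a-1 \<and> j=0) \<or> (t=3 \<and> i<b \<and> j=0)"
  by (auto simp: VU_def)

lemma U_fin: "finite (VU L a b)" by (simp add: VU_def)

lemma U_sym: "\<forall>x y. EU L a b x y \<longrightarrow> EU L a b y x" by (auto simp: EU_def)

lemma U_irr: "\<forall>x. \<not> EU L a b x x" by (auto simp: EU_def DU_def)

lemma U_inV: "\<forall>x y. EU L a b x y \<longrightarrow> x \<in> VU L a b \<and> y \<in> VU L a b"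
  by (auto simp: EU_def DU_def VU_def)

lemma U_Nz: "N' (VU L a b) (EU L a b) (0,0,0) = insert (1,1,0) ((\<lambda>j. (3,j,0)) ` {..<b})"
  using L3 by (auto simp: N'_def EU_def DU_def VU_def)

lemma U_N1: "N' (VU L a b) (EU L a b) (1,1,0) = {(0,0,0), (1,2,0)}"
  using L3 by (auto simp: N'_def EU_def DU_def VU_def)

lemma U_Ni: "2 \<le> i \<Longrightarrow> i < L \<Longrightarrow> N' (VU L a b) (EU L a b) (1,i,0) = {(1,i-1,0), (1,Suc i,0)}"
  unfolding N'_def EU_def DU_def by (auto simp: mem_VU)

lemma U_NL: "N' (VU L a b) (EU L a b) (1,L,0) = {(1,L-1,0)}"
  using L3 by (auto simp: N'_def EU_def DU_def VU_def)

lemma U_NP: "i < a - 1 \<Longrightarrow> N' (VU L a b) (EU L a b) (2,i,0) = (\<lambda>j. (3,j,0)) ` {..<b}"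
  by (auto simp: N'_def EU_def DU_def VU_def)

lemma U_NQ: "j < b \<Longrightarrow> N' (VU L a b) (EU L a b) (3,j,0) = insert (0,0,0) ((\<lambda>i. (2,i,0)) ` {..<a-1})"
  by (auto simp: N'_def EU_def DU_def VU_def)

lemma inj3: "inj_on (\<lambda>j. (t::nat, j, 0::nat)) A" by (auto simp: inj_on_def)

lemma U_dz: "card (N' (VU L a b) (EU L a b) (0,0,0)) = Suc b"
  unfolding U_Nz by (subst card_insert_disjoint) (auto simp: card_image[OF inj3])

lemma U_d1: "card (N' (VU L a b) (EU L a b) (1,1,0)) = 2"
  unfolding U_N1 by simp

lemma U_di: "2 \<le> i \<Longrightarrow> i < L \<Longrightarrow> card (N' (VU L a b) (EU L a b) (1,i,0)) = 2"
  by (subst U_Ni) auto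

lemma U_dP: "i < a - 1 \<Longrightarrow> card (N' (VU L a b) (EU L a b) (2,i,0)) = b"
  by (simp add: U_NP card_image[OF inj3])

lemma U_dQ: "j < b \<Longrightarrow> card (N' (VU L a b) (EU L a b) (3,j,0)) = a"
proof -
  assume "j < b"
  then have "card (N' (VU L a b) (EU L a b) (3,j,0)) = Suc (card ((\<lambda>i. (2::nat,i,0::nat)) ` {..<a-1}))"
    by (subst U_NQ) (auto intro!: card_insert_disjoint)
  then show ?thesis using a1 by (simp add: card_image[OF inj3])
qed


lemma U_reach: "\<forall>x\<in>VU L a b. (EU L a b)\<^sup>*\<^sup>* (0,0,0) x"
proof -
  have path: "1 \<le> i \<Longrightarrow> i \<le> L \<Longrightarrow> (EU L a b)\<^sup>*\<^sup>* (0,0,0) (1,i,0)" for i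
  proof (induction i)
    case 0 then show ?case by simp
  next
    case (Suc i)
    show ?case
    proof (cases "i = 0")
      case True
      then have "EU L a b (0,0,0) (1,Suc i,0)" using L3 by (simp add: EU_def DU_def)
      then show ?thesis by blast
    next
      case False
      then have "(EU L a b)\<^sup>*\<^sup>* (0,0,0) (1,i,0)" using Suc by simp
      moreover have "EU L a b (1,i,0) (1,Suc i,0)" using False Suc.prems by (simp add: EU_def DU_def)
      ultimately show ?thesis by (rule rtranclp.rtrancl_into_rtrancl)
    qed
  qed
  show ?thesis
  proof
    fix x assume "x \<in> VU L a b"
    then obtain t i j where x: "x = (t,i,j)" "(t,i,j) \<in> VU L a b" by (cases x) auto
    then consider "t=0 \<and> i=0 \<and> j=0" | "t=1 \<and> 1\<le>i \<and> i\<le>L \<and> j=0" | "t=2 \<and> i<a-1 \<and> j=0" | "t=3 \<and> i<b \<and> j=0"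
      by (auto simp: mem_VU)
    then show "(EU L a b)\<^sup>*\<^sup>* (0,0,0) x"
    proof cases
      case 1 then show ?thesis using x by simp
    next
      case 2 then show ?thesis using x path by simp
    next
      case 3
      have "EU L a b (0,0,0) (3,0,0)" using b1 by (simp add: EU_def DU_def)
      moreover have "EU L a b (3,0,0) (2,i,0)" using b1 3 by (simp add: EU_def DU_def)
      ultimately show ?thesis using x 3 by (meson converse_rtranclp_into_rtranclp r_into_rtranclp)
    next
      case 4
      then have "EU L a b (0,0,0) (3,i,0)" by (simp add: EU_def DU_def)
      then show ?thesis using x 4 by blast
    qed
  qed
qed

lemma U_nz: "\<forall>x\<in>VU L a b. N' (VU L a b) (EU L a b) x \<noteq> {}"
proof
  fix x assume "x \<in> VU L a b"
  then obtain t i j where x: "x = (t,i,j)" "(t,i,j) \<in> VU L a b" by (cases x) auto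
  then consider "t=0 \<and> i=0 \<and> j=0" | "t=1 \<and> i=1 \<and> j=0" | "t=1 \<and> 2\<le>i \<and> i<L \<and> j=0" | "t=1 \<and> i=L \<and> j=0"
     | "t=2 \<and> i<a-1 \<and> j=0" | "t=3 \<and> i<b \<and> j=0"
    by (auto simp: mem_VU) linarith
  then show "N' (VU L a b) (EU L a b) x \<noteq> {}"
  proof cases
    case 1 then show ?thesis using x U_Nz by simp
  next
    case 2 then show ?thesis using x U_N1 by simp
  next
    case 3 then show ?thesis using x U_Ni by simp
  next
    case 4 then show ?thesis using x U_NL by simp
  next
    case 5
    then have "N' (VU L a b) (EU L a b) x = (\<lambda>j. (3, j, 0)) ` {..<b}" using x U_NP by simp
    moreover have "(3,0,0) \<in> (\<lambda>j. (3::nat, j, 0::nat)) ` {..<b}" using b1 by force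
    ultimately show ?thesis by auto
  next
    case 6 then show ?thesis using x U_NQ by simp
  qed
qed

lemma U_card: "card (VU L a b) \<le> L + a + b"
proof -
  have "card (VU L a b) \<le> card ({(0::nat,0::nat,0::nat)} \<union> (\<lambda>i. (1::nat,i,0::nat)) ` {1..L} \<union> (\<lambda>j. (2::nat,j,0::nat)) ` {..<a-1})
      + card ((\<lambda>j. (3::nat,j,0::nat)) ` {..<b})"
    unfolding VU_def by (rule card_Un_le)
  also have "\<dots> \<le> card ({(0::nat,0::nat,0::nat)} \<union> (\<lambda>i. (1::nat,i,0::nat)) ` {1..L}) + card ((\<lambda>j. (2::nat,j,0::nat)) ` {..<a-1}) + b"
    using card_Un_le card_image_le by (metis (no_types, lifting) add_le_mono card_lessThan finite_lessThan)
  also have "\<dots> \<le> 1 + L + (a - 1) + b"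
  proof -
    have "card ({(0::nat,0::nat,0::nat)} \<union> (\<lambda>i. (1::nat,i,0::nat)) ` {1..L}) \<le> 1 + L"
    proof -
      have "card ({(0::nat,0::nat,0::nat)} \<union> (\<lambda>i. (1::nat,i,0::nat)) ` {1..L}) \<le> card {(0::nat,0::nat,0::nat)} + card ((\<lambda>i. (1::nat,i,0::nat)) ` {1..L})"
        by (rule card_Un_le)
      also have "\<dots> \<le> 1 + card {1..L}" using card_image_le[of "{1..L}" "\<lambda>i. (1::nat,i,0::nat)"] by simp
      finally show ?thesis by simp
    qed
    moreover have "card ((\<lambda>j. (2::nat,j,0::nat)) ` {..<a-1}) \<le> a - 1"
      by (metis card_image_le card_lessThan finite_lessThan)
    ultimately show ?thesis by simp
  qed
  finally show ?thesis using a1 by simp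
qed


lemma sum_img3: "(\<Sum>y\<in>(\<lambda>j. (t::nat, j, 0::nat)) ` A. F y) = (\<Sum>j\<in>A. F (t, j, 0))"
  by (rule sum.reindex[OF inj3, unfolded comp_def])

context
  fixes f :: "nat \<Rightarrow> nat \<Rightarrow> real"
  assumes pos: "\<forall>a b. 1 \<le> a \<longrightarrow> 1 \<le> b \<longrightarrow> 0 < f a b"
    and symm: "\<forall>a b. f a b = f b a"
begin

abbreviation "dU x \<equiv> card (N' (VU L a b) (EU L a b) x)"

lemma U_pos: "0 < f a b" "0 < f a (Suc b)" "0 < f 2 (Suc b)" "0 < f 2 2"
  using pos a1 b1 by auto

lemma U_lam: "0 \<le> lamU f a b" "lamU f a b * f 2 2 = real b * (f a (Suc b) + real (a-1) * f a b)"
  using U_pos by (auto simp: lamU_def)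

lemma U_kap: "0 \<le> kapU f a b" "kapU f a b * f 2 (Suc b) = lamU f a b * f 2 2"
  using U_pos U_lam by (auto simp: kapU_def)

lemma U_nu: "0 \<le> nuU f a b" "nuU f a b * f a (Suc b) = real (a-1) * f a b"
  using U_pos by (auto simp: nuU_def)

lemma U_Z: "0 \<le> ZU f L a b"
  using U_lam U_kap L3 by (simp add: ZU_def)

lemma U_nn: "0 \<le> psiU f L a b x"
  using U_lam U_kap U_nu U_Z by (cases x) (auto simp: psiU_def)

lemma U_sub:
  assumes x: "x \<in> VU L a b" and p: "0 < psiU f L a b x"
  shows "(\<Sum>y\<in>N' (VU L a b) (EU L a b) x. f (dU x) (dU y) * (psiU f L a b x - psiU f L a b y))
       \<le> (\<Sum>y\<in>N' (VU L a b) (EU L a b) x. f (dU x) (dU y))"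
proof -
  obtain t i j where x': "x = (t,i,j)" "(t,i,j) \<in> VU L a b" using x by (cases x) auto
  then consider "t=0 \<and> i=0 \<and> j=0" | "t=1 \<and> i=1 \<and> j=0" | "t=1 \<and> 2\<le>i \<and> i<L \<and> j=0" | "t=1 \<and> i=L \<and> j=0"
     | "t=2 \<and> i<a-1 \<and> j=0" | "t=3 \<and> i<b \<and> j=0"
    by (auto simp: mem_VU) linarith
  then show ?thesis
  proof cases
    case 1
    then have xz: "x = (0,0,0)" using x' by simp
    have nn: "(1::nat,1::nat,0::nat) \<notin> (\<lambda>j. (3::nat, j, 0::nat)) ` {..<b}" by auto
    have L2: "real (L - 1 - 1) = real L - 2" using L3 by simp
    have "(\<Sum>y\<in>N' (VU L a b) (EU L a b) x. f (dU x) (dU y) * (psiU f L a b x - psiU f L a b y))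
       = f (Suc b) 2 * kapU f a b + (\<Sum>j<b. f (Suc b) a * (- nuU f a b))"
      unfolding xz U_Nz using nn U_dz U_d1 U_dQ L2
      by (simp add: sum_img3 psiU_def ZU_def card_image[OF inj3])
    also have "\<dots> = real b * f a (Suc b)"
      using U_kap U_nu U_lam symm by (simp add: algebra_simps)
    also have "\<dots> \<le> f (Suc b) 2 + (\<Sum>j<b. f (Suc b) a)"
      using U_pos symm by simp
    also have "\<dots> = (\<Sum>y\<in>N' (VU L a b) (EU L a b) x. f (dU x) (dU y))"
      unfolding xz U_Nz using nn U_dz U_d1 U_dQ by (simp add: sum_img3 card_image[OF inj3])
    finally show ?thesis .
  next
    case 2
    then have xz: "x = (1,1,0)" using x' by simp
    have L2: "real (L - 1 - 1) = real L - 2" "real (L - 1 - 2) = real L - 3" using L3 by auto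
    have d2: "dU (1,2,0) = 2" using U_di L3 by simp
    have "(\<Sum>y\<in>N' (VU L a b) (EU L a b) x. f (dU x) (dU y) * (psiU f L a b x - psiU f L a b y))
       = f 2 (Suc b) * (- kapU f a b) + f 2 2 * lamU f a b"
      unfolding xz U_N1 using U_dz U_d1 d2 L2
      by (simp add: psiU_def ZU_def algebra_simps numeral_2_eq_2)
    also have "\<dots> = 0" using U_kap by (simp add: algebra_simps)
    also have "\<dots> \<le> (\<Sum>y\<in>N' (VU L a b) (EU L a b) x. f (dU x) (dU y))"
      unfolding xz U_N1 using U_dz U_d1 d2 U_pos by (simp add: less_imp_le numeral_2_eq_2)
    finally show ?thesis .
  next
    case 3
    then have xz: "x = (1,i,0)" and i: "2 \<le> i" "i < L" using x' by auto
    have iL: "i \<le> L - 2"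
    proof (rule ccontr)
      assume "\<not> i \<le> L - 2"
      then have "L - 1 - i = 0" by simp
      then have "psiU f L a b x = 0" using xz by (simp add: psiU_def)
      then show False using p by simp
    qed
    have R: "real (L - 1 - i) = real L - 1 - real i" "real (L - 1 - (i - 1)) = real L - real i"
         "real (L - 1 - Suc i) = real L - 2 - real i" using iL i by auto
    have dl: "dU (1, i-1, 0) = 2"
    proof (cases "i = 2")
      case True then show ?thesis using U_d1 by simp
    next
      case False then show ?thesis using U_di[of "i-1"] i by simp
    qed
    have dr: "dU (1, Suc i, 0) = 2" using U_di[of "Suc i"] i iL by simp
    have ne: "(1::nat, i - 1, 0::nat) \<noteq> (1, Suc i, 0)" by simp
    have Nx: "N' (VU L a b) (EU L a b) x = {(1,i-1,0), (1,Suc i,0)}" using U_Ni[OF i] xz by simp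
    have dx: "dU x = 2" using U_di[OF i] xz by simp
    define G where "G y = f (dU x) (dU y) * (psiU f L a b x - psiU f L a b y)" for y
    define G2 where "G2 y = f (dU x) (dU y)" for y
    have "(\<Sum>y\<in>N' (VU L a b) (EU L a b) x. G y) = G (1,i-1,0) + G (1,Suc i,0)"
      using ne by (simp only: Nx sum.insert finite.emptyI finite_insert insert_iff empty_iff sum.empty) simp
    also have "\<dots> = f 2 2 * (lamU f a b * (real L - 1 - real i) - lamU f a b * (real L - real i))
        + f 2 2 * (lamU f a b * (real L - 1 - real i) - lamU f a b * (real L - 2 - real i))"
      unfolding G_def dx dl dr using R xz by (simp add: psiU_def diff_diff_eq)
    also have "\<dots> = 0" by (simp add: algebra_simps)
    also have "\<dots> \<le> G2 (1,i-1,0) + G2 (1,Suc i,0)"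
      unfolding G2_def dx dl dr using U_pos by simp
    also have "\<dots> = (\<Sum>y\<in>N' (VU L a b) (EU L a b) x. G2 y)"
      using ne by (simp only: Nx sum.insert finite.emptyI finite_insert insert_iff empty_iff sum.empty) simp
    finally show ?thesis unfolding G_def G2_def .
  next
    case 4
    then show ?thesis using p x' by (simp add: psiU_def)
  next
    case 5
    then have xz: "x = (2,i,0)" and i: "i < a - 1" using x' by auto
    have "(\<Sum>y\<in>N' (VU L a b) (EU L a b) x. f (dU x) (dU y) * (psiU f L a b x - psiU f L a b y))
       = (\<Sum>y\<in>N' (VU L a b) (EU L a b) x. f (dU x) (dU y))"
      unfolding xz U_NP[OF i] using U_dP[OF i] U_dQ by (simp add: sum_img3 psiU_def)
    then show ?thesis by simp
  next
    case 6
    then have xz: "x = (3,i,0)" and i: "i < b" using x' by auto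
    have nn: "(0::nat,0::nat,0::nat) \<notin> (\<lambda>j. (2::nat, j, 0::nat)) ` {..<a-1}" by auto
    have "(\<Sum>y\<in>N' (VU L a b) (EU L a b) x. f (dU x) (dU y) * (psiU f L a b x - psiU f L a b y))
       = f a (Suc b) * nuU f a b + (\<Sum>j<a-1. f a b * (- 1))"
      unfolding xz U_NQ[OF i] using nn U_dQ[OF i] U_dz U_dP a1
      by (simp add: sum_img3 psiU_def card_image[OF inj3])
    also have "\<dots> = 0" using U_nu by (simp add: algebra_simps)
    also have "\<dots> \<le> (\<Sum>y\<in>N' (VU L a b) (EU L a b) x. f (dU x) (dU y))"
      unfolding xz U_NQ[OF i] using nn U_dQ[OF i] U_dz U_dP U_pos a1
      by (simp add: sum_img3 less_imp_le sum_nonneg card_image[OF inj3])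
    finally show ?thesis .
  qed
qed


lemma U_main:
  "simple_graph (gV (VU L a b)) (gE (VU L a b) (EU L a b)) \<and> graph_connected (gV (VU L a b)) (gE (VU L a b) (EU L a b))
   \<and> card (gV (VU L a b)) \<le> L + a + b
   \<and> (\<forall>xs. distinct xs \<and> set xs = gV (VU L a b) \<longrightarrow>
        lamU f a b * (real L - 2) \<le> cyc_sum (gV (VU L a b)) (gE (VU L a b) (EU L a b)) (local_cond f (gV (VU L a b)) (gE (VU L a b) (EU L a b))) xs)"
proof (intro conjI allI impI)
  let ?V = "gV (VU L a b)" and ?E = "gE (VU L a b) (EU L a b)"
  show sg: "simple_graph ?V ?E" by (rule simple_enc[OF U_fin U_sym U_irr])
  have z: "(0,0,0) \<in> VU L a b" by (simp add: mem_VU)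
  show con: "graph_connected ?V ?E" by (rule connected_enc[OF z U_reach U_sym U_inV])
  show "card ?V \<le> L + a + b" using U_card by (simp add: card_gV)
  have ok: "walk_ok ?V ?E (local_cond f ?V ?E)" by (rule walk_ok_enc[OF U_fin U_sym U_irr U_nz pos])
  fix xs assume xs: "distinct xs \<and> set xs = ?V"
  define \<psi> where "\<psi> u = psiU f L a b (dec u)" for u
  have nn: "\<forall>y\<in>?V. 0 \<le> \<psi> y" using U_nn by (simp add: \<psi>_def)
  have sub: "\<forall>y\<in>?V. 0 < \<psi> y \<longrightarrow>
        (\<Sum>w\<in>nbrs ?V ?E y. local_cond f ?V ?E y w * (\<psi> y - \<psi> w)) \<le> (\<Sum>w\<in>nbrs ?V ?E y. local_cond f ?V ?E y w)"
  proof (intro ballI impI)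
    fix y assume y: "y \<in> ?V" "0 < \<psi> y"
    then obtain x where x: "x \<in> VU L a b" "y = enc x" by (auto simp: gV_def)
    have p: "0 < psiU f L a b x" using y x by (simp add: \<psi>_def)
    show "(\<Sum>w\<in>nbrs ?V ?E y. local_cond f ?V ?E y w * (\<psi> y - \<psi> w)) \<le> (\<Sum>w\<in>nbrs ?V ?E y. local_cond f ?V ?E y w)"
      unfolding x(2) \<psi>_def by (rule sub_enc[where \<psi>="psiU f L a b" and f=f and V'="VU L a b" and E'="EU L a b", OF x(1) U_sub[OF x(1) p]])
  qed
  have uV: "enc (0,0,0) \<in> ?V" using z by simp
  have vV: "enc (1,L,0) \<in> ?V" using L3 by (simp add: mem_VU)
  have "\<psi> (enc (0,0,0)) - \<psi> (enc (1,L,0)) \<le> cyc_sum ?V ?E (local_cond f ?V ?E) xs"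
    using cyc_T2[OF ok con nn sub _ _ uV vV] xs by blast
  moreover have "\<psi> (enc (0,0,0)) - \<psi> (enc (1,L,0)) = ZU f L a b" by (simp add: \<psi>_def psiU_def)
  moreover have "lamU f a b * (real L - 2) \<le> ZU f L a b" using U_kap by (simp add: ZU_def)
  ultimately show "lamU f a b * (real L - 2) \<le> cyc_sum ?V ?E (local_cond f ?V ?E) xs" by simp
qed

end
end

definition VL :: "nat \<Rightarrow> nat \<Rightarrow> nat \<Rightarrow> (nat \<times> nat \<times> nat) set" where
  "VL L a b = {(0,0,0)} \<union> (\<lambda>i. (1,i,0)) ` {1..L} \<union> (\<lambda>j. (2,j,0)) ` {..<b-1} \<union> (\<lambda>(j,k). (3,j,k)) ` ({..<b-1} \<times> {..<a-1})"

definition DL :: "nat \<Rightarrow> nat \<Rightarrow> nat \<Rightarrow> nat \<times> nat \<times> nat \<Rightarrow> nat \<times> nat \<times> nat \<Rightarrow> bool" where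
  "DL L a b x y \<longleftrightarrow> (x = (0,0,0) \<and> y = (1,1,0) \<and> 1 \<le> L) \<or> (\<exists>i. 1 \<le> i \<and> i < L \<and> x = (1,i,0) \<and> y = (1,Suc i,0))
     \<or> (\<exists>j<b-1. x = (0,0,0) \<and> y = (2,j,0)) \<or> (\<exists>j<b-1. \<exists>k<a-1. x = (2,j,0) \<and> y = (3,j,k))"

definition EL :: "nat \<Rightarrow> nat \<Rightarrow> nat \<Rightarrow> nat \<times> nat \<times> nat \<Rightarrow> nat \<times> nat \<times> nat \<Rightarrow> bool" where
  "EL L a b x y \<longleftrightarrow> DL L a b x y \<or> DL L a b y x"

definition SL :: "nat \<Rightarrow> nat \<Rightarrow> (nat \<times> nat \<times> nat) set" where
  "SL a j = insert (2,j,0) ((\<lambda>k. (3,j,k)) ` {..<a-1})"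

definition BL :: "(nat \<Rightarrow> nat \<Rightarrow> real) \<Rightarrow> nat \<Rightarrow> nat \<Rightarrow> nat \<Rightarrow> real" where
  "BL f L a b = f 2 2 * (2 * real L - 3) / (3 * f b a)"
definition tauL :: "(nat \<Rightarrow> nat \<Rightarrow> real) \<Rightarrow> nat \<Rightarrow> nat \<Rightarrow> real" where
  "tauL f L b = f 2 2 * (2 * real L - 3) / (3 * f b 2)"
definition delL :: "nat \<Rightarrow> nat \<Rightarrow> real" where
  "delL L i = real (i - 1) * (2 * (real L - 1) - real (i - 1)) / 3"
definition psiL :: "(nat \<Rightarrow> nat \<Rightarrow> real) \<Rightarrow> nat \<Rightarrow> nat \<Rightarrow> nat \<Rightarrow> nat \<Rightarrow> nat \<times> nat \<times> nat \<Rightarrow> real" where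
  "psiL f L a b j x = (case x of (t,i,k) \<Rightarrow> if t = 0 then BL f L a b
     else if t = 1 then BL f L a b + tauL f L b + delL L i
     else if i = j then 0 else BL f L a b)"

lemma inj3': "inj_on (\<lambda>k. (t::nat, j::nat, k::nat)) A" by (auto simp: inj_on_def)
lemma inj3g: "inj_on (\<lambda>j. (t::nat, j, 0::nat)) A" by (auto simp: inj_on_def)
lemma sum_img3g: "(\<Sum>y\<in>(\<lambda>j. (t::nat, j, 0::nat)) ` A. F y) = (\<Sum>j\<in>A. F (t, j, 0))"
  by (rule sum.reindex[OF inj3g, unfolded comp_def])
lemma sum_img3': "(\<Sum>y\<in>(\<lambda>k. (t::nat, j::nat, k::nat)) ` A. F y) = (\<Sum>k\<in>A. F (t, j, k))"
  by (rule sum.reindex[OF inj3', unfolded comp_def])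

context
  fixes L a b :: nat
  assumes L3: "3 \<le> L" and a1: "1 \<le> a" and b2: "2 \<le> b"
begin

lemma mem_VL: "(t,i,k) \<in> VL L a b \<longleftrightarrow> (t=0 \<and> i=0 \<and> k=0) \<or> (t=1 \<and> 1\<le>i \<and> i\<le>L \<and> k=0) \<or> (t=2 \<and> i<b-1 \<and> k=0) \<or> (t=3 \<and> i<b-1 \<and> k<a-1)"
  by (auto simp: VL_def)

lemma L_fin: "finite (VL L a b)" by (simp add: VL_def)

lemma L_sym: "\<forall>x y. EL L a b x y \<longrightarrow> EL L a b y x" by (auto simp: EL_def)

lemma L_irr: "\<forall>x. \<not> EL L a b x x" by (auto simp: EL_def DL_def)

lemma L_inV: "\<forall>x y. EL L a b x y \<longrightarrow> x \<in> VL L a b \<and> y \<in> VL L a b"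
  unfolding EL_def DL_def by (auto simp: mem_VL)

lemma L_Nh: "N' (VL L a b) (EL L a b) (0,0,0) = insert (1,1,0) ((\<lambda>j. (2,j,0)) ` {..<b-1})"
  using L3 unfolding N'_def EL_def DL_def by (auto simp: mem_VL)

lemma L_N1: "N' (VL L a b) (EL L a b) (1,1,0) = {(0,0,0), (1,2,0)}"
  using L3 unfolding N'_def EL_def DL_def by (auto simp: mem_VL)

lemma L_Ni: "2 \<le> i \<Longrightarrow> i < L \<Longrightarrow> N' (VL L a b) (EL L a b) (1,i,0) = {(1,i-1,0), (1,Suc i,0)}"
  unfolding N'_def EL_def DL_def by (auto simp: mem_VL)

lemma L_NL: "N' (VL L a b) (EL L a b) (1,L,0) = {(1,L-1,0)}"
  using L3 unfolding N'_def EL_def DL_def by (auto simp: mem_VL)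

lemma L_NE: "j < b - 1 \<Longrightarrow> N' (VL L a b) (EL L a b) (2,j,0) = insert (0,0,0) ((\<lambda>k. (3,j,k)) ` {..<a-1})"
  unfolding N'_def EL_def DL_def by (auto simp: mem_VL)

lemma L_NF: "j < b - 1 \<Longrightarrow> k < a - 1 \<Longrightarrow> N' (VL L a b) (EL L a b) (3,j,k) = {(2,j,0)}"
  unfolding N'_def EL_def DL_def by (auto simp: mem_VL)


lemma L_dh: "card (N' (VL L a b) (EL L a b) (0,0,0)) = b"
  unfolding L_Nh using b2 by (subst card_insert_disjoint) (auto simp: card_image[OF inj3g])

lemma L_d1: "card (N' (VL L a b) (EL L a b) (1,1,0)) = 2"
  unfolding L_N1 by simp

lemma L_di: "2 \<le> i \<Longrightarrow> i < L \<Longrightarrow> card (N' (VL L a b) (EL L a b) (1,i,0)) = 2"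
  by (subst L_Ni) auto

lemma L_dL: "card (N' (VL L a b) (EL L a b) (1,L,0)) = 1"
  unfolding L_NL by simp

lemma L_dE: "j < b - 1 \<Longrightarrow> card (N' (VL L a b) (EL L a b) (2,j,0)) = a"
proof -
  assume "j < b - 1"
  then have "card (N' (VL L a b) (EL L a b) (2,j,0)) = Suc (card ((\<lambda>k. (3::nat,j,k)) ` {..<a-1}))"
    by (subst L_NE) (auto intro!: card_insert_disjoint)
  then show ?thesis using a1 by (simp add: card_image[OF inj3'])
qed

lemma L_dF: "j < b - 1 \<Longrightarrow> k < a - 1 \<Longrightarrow> card (N' (VL L a b) (EL L a b) (3,j,k)) = 1"
  by (simp add: L_NF)


lemma L_reach: "\<forall>x\<in>VL L a b. (EL L a b)\<^sup>*\<^sup>* (0,0,0) x"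
proof -
  have path: "1 \<le> i \<Longrightarrow> i \<le> L \<Longrightarrow> (EL L a b)\<^sup>*\<^sup>* (0,0,0) (1,i,0)" for i
  proof (induction i)
    case 0 then show ?case by simp
  next
    case (Suc i)
    show ?case
    proof (cases "i = 0")
      case True
      then have "EL L a b (0,0,0) (1,Suc i,0)" using L3 by (simp add: EL_def DL_def)
      then show ?thesis by blast
    next
      case False
      then have "(EL L a b)\<^sup>*\<^sup>* (0,0,0) (1,i,0)" using Suc by simp
      moreover have "EL L a b (1,i,0) (1,Suc i,0)" using False Suc.prems by (simp add: EL_def DL_def)
      ultimately show ?thesis by (rule rtranclp.rtrancl_into_rtrancl)
    qed
  qed
  show ?thesis
  proof
    fix x assume "x \<in> VL L a b"
    then obtain t i k where x: "x = (t,i,k)" "(t,i,k) \<in> VL L a b" by (cases x) auto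
    then consider "t=0 \<and> i=0 \<and> k=0" | "t=1 \<and> 1\<le>i \<and> i\<le>L \<and> k=0" | "t=2 \<and> i<b-1 \<and> k=0" | "t=3 \<and> i<b-1 \<and> k<a-1"
      by (auto simp: mem_VL)
    then show "(EL L a b)\<^sup>*\<^sup>* (0,0,0) x"
    proof cases
      case 1 then show ?thesis using x by simp
    next
      case 2 then show ?thesis using x path by simp
    next
      case 3
      then have "EL L a b (0,0,0) (2,i,0)" by (simp add: EL_def DL_def)
      then show ?thesis using x 3 by blast
    next
      case 4
      have "EL L a b (0,0,0) (2,i,0)" using 4 by (simp add: EL_def DL_def)
      moreover have "EL L a b (2,i,0) (3,i,k)" using 4 by (simp add: EL_def DL_def)
      ultimately show ?thesis using x 4 by (meson converse_rtranclp_into_rtranclp r_into_rtranclp)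
    qed
  qed
qed

lemma L_nz: "\<forall>x\<in>VL L a b. N' (VL L a b) (EL L a b) x \<noteq> {}"
proof
  fix x assume "x \<in> VL L a b"
  then obtain t i k where x: "x = (t,i,k)" "(t,i,k) \<in> VL L a b" by (cases x) auto
  then consider "t=0 \<and> i=0 \<and> k=0" | "t=1 \<and> i=1 \<and> k=0" | "t=1 \<and> 2\<le>i \<and> i<L \<and> k=0" | "t=1 \<and> i=L \<and> k=0"
     | "t=2 \<and> i<b-1 \<and> k=0" | "t=3 \<and> i<b-1 \<and> k<a-1"
    by (auto simp: mem_VL) linarith
  then show "N' (VL L a b) (EL L a b) x \<noteq> {}"
  proof cases
    case 1 then show ?thesis using x L_Nh by simp
  next
    case 2 then show ?thesis using x L_N1 by simp
  next
    case 3 then show ?thesis using x L_Ni by simp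
  next
    case 4 then show ?thesis using x L_NL by simp
  next
    case 5 then show ?thesis using x L_NE by simp
  next
    case 6 then show ?thesis using x L_NF by simp
  qed
qed

lemma L_card: "card (VL L a b) \<le> L + 1 + (b - 1) * a"
proof -
  let ?A = "{(0::nat,0::nat,0::nat)}" and ?B = "(\<lambda>i. (1::nat,i,0::nat)) ` {1..L}"
    and ?C = "(\<lambda>j. (2::nat,j,0::nat)) ` {..<b-1}" and ?D = "(\<lambda>(j,k). (3::nat,j::nat,k::nat)) ` ({..<b-1} \<times> {..<a-1})"
  have "card (VL L a b) \<le> card (?A \<union> ?B \<union> ?C) + card ?D" unfolding VL_def by (rule card_Un_le)
  also have "\<dots> \<le> card (?A \<union> ?B) + card ?C + card ?D" using card_Un_le[of "?A \<union> ?B" ?C] by simp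
  also have "\<dots> \<le> card ?A + card ?B + card ?C + card ?D" using card_Un_le[of ?A ?B] by simp
  also have "\<dots> \<le> 1 + L + (b - 1) + (b - 1) * (a - 1)"
  proof -
    have "card ?B \<le> L" using card_image_le[of "{1..L}" "\<lambda>i. (1::nat,i,0::nat)"] by simp
    moreover have "card ?C \<le> b - 1" using card_image_le[of "{..<b-1}" "\<lambda>j. (2::nat,j,0::nat)"] by simp
    moreover have "card ?D \<le> (b - 1) * (a - 1)"
      using card_image_le[of "{..<b-1} \<times> {..<a-1}" "\<lambda>(j,k). (3::nat,j::nat,k::nat)"] by (simp add: card_cartesian_product)
    ultimately show ?thesis by simp
  qed
  also have "\<dots> = L + 1 + (b - 1) * a"
  proof -
    obtain m where m: "b - 1 = m" by blast
    obtain n where n: "a = Suc n" using a1 by (cases a) auto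
    show ?thesis unfolding m n by simp
  qed
  finally show ?thesis .
qed


lemma del1: "delL L 1 = 0" "delL L (Suc 0) = 0" by (simp_all add: delL_def)
lemma del2: "delL L 2 = (2 * real L - 3) / 3" by (simp add: delL_def algebra_simps)
lemma del_mid: "2 \<le> i \<Longrightarrow> 2 * delL L i - delL L (i - 1) - delL L (Suc i) = 2 / 3"
proof -
  assume i: "2 \<le> i"
  have r: "real (i - 1) = real i - 1" "real (i - 1 - 1) = real i - 2" using i by auto
  show ?thesis unfolding delL_def using r by (simp add: field_simps)
qed
lemma del_end1: "delL L (L - 1) - delL L (L - 1 - 1) = 1"
proof -
  have r: "real (L - 1 - 1) = real L - 2" "real (L - 1 - 1 - 1) = real L - 3" using L3 by auto
  show ?thesis unfolding delL_def using r by (simp add: field_simps)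
qed
lemma del_end2: "delL L L - delL L (L - 1) = 1 / 3"
proof -
  have r: "real (L - 1) = real L - 1" "real (L - 1 - 1) = real L - 2" using L3 by auto
  show ?thesis unfolding delL_def using r by (simp add: field_simps)
qed
lemma del_nn: "1 \<le> i \<Longrightarrow> i \<le> L \<Longrightarrow> 0 \<le> delL L i"
proof -
  assume i: "1 \<le> i" "i \<le> L"
  have "real (i - 1) \<le> 2 * (real L - 1) - real (i - 1)" using i by (simp add: of_nat_diff)
  then show ?thesis unfolding delL_def by simp
qed

context
  fixes f :: "nat \<Rightarrow> nat \<Rightarrow> real"
  assumes pos: "\<forall>a b. 1 \<le> a \<longrightarrow> 1 \<le> b \<longrightarrow> 0 < f a b"
    and symm: "\<forall>a b. f a b = f b a"
begin

abbreviation "dL x \<equiv> card (N' (VL L a b) (EL L a b) x)"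

lemma L_pos: "0 < f b a" "0 < f b 2" "0 < f 2 2" "0 < f 2 1"
  using pos a1 b2 by auto

lemma L_B: "0 \<le> BL f L a b" "f b a * BL f L a b = f 2 2 * (2 * real L - 3) / 3"
  using L_pos L3 by (auto simp: BL_def)

lemma L_tau: "0 \<le> tauL f L b" "f b 2 * tauL f L b = f 2 2 * (2 * real L - 3) / 3"
  using L_pos L3 by (auto simp: tauL_def)

lemma L_lower:
  assumes x: "x \<in> VL L a b" "x \<notin> SL a j"
  shows "BL f L a b \<le> psiL f L a b j x"
proof -
  obtain t i k where x': "x = (t,i,k)" "(t,i,k) \<in> VL L a b" using x by (cases x) auto
  then show ?thesis using x L_tau del_nn[of i] by (auto simp: psiL_def mem_VL SL_def)
qed

lemma L_sub:
  assumes j: "j < b - 1" and x: "x \<in> VL L a b" and p: "0 < psiL f L a b j x"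
  shows "(\<Sum>y\<in>N' (VL L a b) (EL L a b) x. f (dL x) (dL y) * (psiL f L a b j x - psiL f L a b j y))
       \<le> (\<Sum>y\<in>N' (VL L a b) (EL L a b) x. f (dL x) (dL y))"
proof -
  have rhs: "0 \<le> (\<Sum>y\<in>N' (VL L a b) (EL L a b) x. f (dL x) (dL y))"
    by (rule rhs_nn[OF L_fin L_nz x pos])
  obtain t i k where x': "x = (t,i,k)" "(t,i,k) \<in> VL L a b" using x by (cases x) auto
  then consider "t=0 \<and> i=0 \<and> k=0" | "t=1 \<and> i=1 \<and> k=0" | "t=1 \<and> 2\<le>i \<and> i<L-1 \<and> k=0" | "t=1 \<and> i=L-1 \<and> k=0"
     | "t=1 \<and> i=L \<and> k=0" | "t=2 \<and> i<b-1 \<and> k=0" | "t=3 \<and> i<b-1 \<and> k<a-1"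
    using L3 by (auto simp: mem_VL) linarith
  then show ?thesis
  proof cases
    case 1
    then have xz: "x = (0,0,0)" using x' by simp
    have nn: "(1::nat,1::nat,0::nat) \<notin> (\<lambda>j. (2::nat, j, 0::nat)) ` {..<b-1}" by auto
    have sd: "(\<Sum>j'<b-1. f b a * (BL f L a b - (if j' = j then 0 else BL f L a b)))
         = (\<Sum>j'<b-1. if j' = j then f b a * BL f L a b else 0)"
      by (rule sum.cong) auto
    have "(\<Sum>y\<in>N' (VL L a b) (EL L a b) x. f (dL x) (dL y) * (psiL f L a b j x - psiL f L a b j y))
       = f b 2 * (- tauL f L b) + (\<Sum>j'<b-1. f b a * (BL f L a b - (if j' = j then 0 else BL f L a b)))"
      unfolding xz L_Nh using nn L_dh L_d1 L_dE b2
      by (simp add: sum_img3g psiL_def card_image[OF inj3g] del1)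
    also have "\<dots> = 0" unfolding sd using j L_B L_tau by simp
    finally show ?thesis using rhs by simp
  next
    case 2
    then have xz: "x = (1,1,0)" using x' by simp
    have d2: "dL (1,2,0) = 2" using L_di L3 by simp
    have "(\<Sum>y\<in>N' (VL L a b) (EL L a b) x. f (dL x) (dL y) * (psiL f L a b j x - psiL f L a b j y))
       = f 2 b * tauL f L b + f 2 2 * (- delL L 2)"
      unfolding xz L_N1 using L_dh L_d1 d2
      by (simp add: psiL_def del1 numeral_2_eq_2)
    also have "\<dots> = 0" using L_tau symm by (simp add: del2 algebra_simps)
    finally show ?thesis using rhs by simp
  next
    case 3
    then have xz: "x = (1,i,0)" and i: "2 \<le> i" "i < L - 1" using x' by auto
    have iL: "i < L" using i by simp
    have Nx: "N' (VL L a b) (EL L a b) x = {(1,i-1,0), (1,Suc i,0)}" using L_Ni[OF i(1) iL] xz by simp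
    have dx: "dL x = 2" using L_di[OF i(1) iL] xz by simp
    have dl: "dL (1, i-1, 0) = 2"
    proof (cases "i = 2")
      case True then show ?thesis using L_d1 by simp
    next
      case False then show ?thesis using L_di[of "i-1"] i by simp
    qed
    have dr: "dL (1, Suc i, 0) = 2" using L_di[of "Suc i"] i by simp
    have ne: "(1::nat, i - 1, 0::nat) \<noteq> (1, Suc i, 0)" by simp
    define G where "G y = f (dL x) (dL y) * (psiL f L a b j x - psiL f L a b j y)" for y
    define G2 where "G2 y = f (dL x) (dL y)" for y
    have "(\<Sum>y\<in>N' (VL L a b) (EL L a b) x. G y) = G (1,i-1,0) + G (1,Suc i,0)"
      using ne by (simp only: Nx sum.insert finite.emptyI finite_insert insert_iff empty_iff sum.empty) simp
    also have "\<dots> = f 2 2 * (2 * delL L i - delL L (i - 1) - delL L (Suc i))"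
      unfolding G_def dx dl dr using xz by (simp add: psiL_def algebra_simps)
    also have "\<dots> = f 2 2 * (2 / 3)" using del_mid[OF i(1)] by simp
    also have "\<dots> \<le> G2 (1,i-1,0) + G2 (1,Suc i,0)"
      unfolding G2_def dx dl dr using L_pos by simp
    also have "\<dots> = (\<Sum>y\<in>N' (VL L a b) (EL L a b) x. G2 y)"
      using ne by (simp only: Nx sum.insert finite.emptyI finite_insert insert_iff empty_iff sum.empty) simp
    finally show ?thesis unfolding G_def G2_def .
  next
    case 4
    then have xz: "x = (1,L-1,0)" using x' by simp
    have i: "2 \<le> L - 1" "L - 1 < L" using L3 by auto
    have Nx: "N' (VL L a b) (EL L a b) x = {(1,L-1-1,0), (1,L,0)}" using L_Ni[OF i] xz L3 by simp
    have dx: "dL x = 2" using L_di[OF i] xz by simp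
    have dl: "dL (1, L-1-1, 0) = 2"
    proof (cases "L = 3")
      case True then show ?thesis using L_d1 by simp
    next
      case False then show ?thesis using L_di[of "L-1-1"] L3 by simp
    qed
    have dr: "dL (1, L, 0) = 1" by (rule L_dL)
    have ne: "(1::nat, L - 1 - 1, 0::nat) \<noteq> (1, L, 0)" using L3 by simp
    define G where "G y = f (dL x) (dL y) * (psiL f L a b j x - psiL f L a b j y)" for y
    define G2 where "G2 y = f (dL x) (dL y)" for y
    have "(\<Sum>y\<in>N' (VL L a b) (EL L a b) x. G y) = G (1,L-1-1,0) + G (1,L,0)"
      using ne by (simp only: Nx sum.insert finite.emptyI finite_insert insert_iff empty_iff sum.empty) simp
    also have "\<dots> = f 2 2 * (delL L (L - 1) - delL L (L - 1 - 1)) - f 2 1 * (delL L L - delL L (L - 1))"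
      unfolding G_def dx dl dr using xz by (simp add: psiL_def algebra_simps)
    also have "\<dots> = f 2 2 - f 2 1 / 3" using del_end1 del_end2 by simp
    also have "\<dots> \<le> G2 (1,L-1-1,0) + G2 (1,L,0)"
      unfolding G2_def dx dl dr using L_pos by simp
    also have "\<dots> = (\<Sum>y\<in>N' (VL L a b) (EL L a b) x. G2 y)"
      using ne by (simp only: Nx sum.insert finite.emptyI finite_insert insert_iff empty_iff sum.empty) simp
    finally show ?thesis unfolding G_def G2_def .
  next
    case 5
    then have xz: "x = (1,L,0)" using x' by simp
    have d2: "dL (1,L-1,0) = 2" using L_di[of "L-1"] L3 by simp
    have "(\<Sum>y\<in>N' (VL L a b) (EL L a b) x. f (dL x) (dL y) * (psiL f L a b j x - psiL f L a b j y))
       = f 1 2 * (delL L L - delL L (L - 1))"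
      unfolding xz L_NL using L_dL d2 by (simp add: psiL_def)
    also have "\<dots> \<le> f 1 2" using del_end2 L_pos symm by simp
    also have "\<dots> = (\<Sum>y\<in>N' (VL L a b) (EL L a b) x. f (dL x) (dL y))"
      unfolding xz L_NL using L_dL d2 by simp
    finally show ?thesis .
  next
    case 6
    then have xz: "x = (2,i,0)" and i: "i < b - 1" using x' by auto
    have "i \<noteq> j" using p xz by (auto simp: psiL_def)
    then have "\<forall>y\<in>N' (VL L a b) (EL L a b) x. psiL f L a b j y = psiL f L a b j x"
      unfolding xz L_NE[OF i] by (auto simp: psiL_def)
    then show ?thesis by (rule const_nbrs[OF _ rhs])
  next
    case 7
    then have xz: "x = (3,i,k)" and i: "i < b - 1" "k < a - 1" using x' by auto
    have "i \<noteq> j" using p xz by (auto simp: psiL_def)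
    then have "\<forall>y\<in>N' (VL L a b) (EL L a b) x. psiL f L a b j y = psiL f L a b j x"
      unfolding xz L_NF[OF i] by (auto simp: psiL_def)
    then show ?thesis by (rule const_nbrs[OF _ rhs])
  qed
qed


lemma L_main:
  "simple_graph (gV (VL L a b)) (gE (VL L a b) (EL L a b)) \<and> graph_connected (gV (VL L a b)) (gE (VL L a b) (EL L a b))
   \<and> card (gV (VL L a b)) \<le> L + 1 + (b - 1) * a
   \<and> (\<forall>xs. distinct xs \<and> set xs = gV (VL L a b) \<longrightarrow>
        real (b - 1) * BL f L a b \<le> cyc_sum (gV (VL L a b)) (gE (VL L a b) (EL L a b)) (local_cond f (gV (VL L a b)) (gE (VL L a b) (EL L a b))) xs)"
proof (intro conjI allI impI)
  let ?V = "gV (VL L a b)" and ?E = "gE (VL L a b) (EL L a b)"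
  show sg: "simple_graph ?V ?E" by (rule simple_enc[OF L_fin L_sym L_irr])
  have h: "(0,0,0) \<in> VL L a b" by (simp add: mem_VL)
  show con: "graph_connected ?V ?E" by (rule connected_enc[OF h L_reach L_sym L_inV])
  show "card ?V \<le> L + 1 + (b - 1) * a" using L_card by (simp add: card_gV)
  have ok: "walk_ok ?V ?E (local_cond f ?V ?E)" by (rule walk_ok_enc[OF L_fin L_sym L_irr L_nz pos])
  fix xs assume xs: "distinct xs \<and> set xs = ?V"
  define S where "S j = enc ` SL a j" for j
  have SLsub: "SL a j \<subseteq> VL L a b" if "j < b - 1" for j using that by (auto simp: SL_def mem_VL)
  have "real (card {..<b-1}) * BL f L a b \<le> cyc_sum ?V ?E (local_cond f ?V ?E) xs"
  proof (rule cyc_T1[OF ok con _ _ finite_lessThan])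
    show "distinct xs" "set xs = ?V" using xs by auto
    show "\<forall>j\<in>{..<b-1}. S j \<subseteq> ?V \<and> S j \<noteq> {} \<and> (\<exists>x\<in>?V. x \<notin> S j)"
    proof
      fix j assume "j \<in> {..<b-1}"
      then have j: "j < b - 1" by simp
      have "S j \<subseteq> ?V" using SLsub[OF j] by (auto simp: S_def gV_def)
      moreover have "S j \<noteq> {}" by (simp add: S_def SL_def)
      moreover have "enc (0,0,0) \<notin> S j"
        by (auto simp: S_def SL_def dest: injD[OF inj_enc])
      ultimately show "S j \<subseteq> ?V \<and> S j \<noteq> {} \<and> (\<exists>x\<in>?V. x \<notin> S j)" using h by auto
    qed
    show "\<forall>i\<in>{..<b-1}. \<forall>j\<in>{..<b-1}. i \<noteq> j \<longrightarrow> S i \<inter> S j = {}"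
    proof (intro ballI impI)
      fix i j :: nat assume "i \<noteq> j"
      then have "SL a i \<inter> SL a j = {}" by (auto simp: SL_def)
      then show "S i \<inter> S j = {}" unfolding S_def by (simp add: image_Int[OF inj_enc, symmetric])
    qed
    show "\<forall>j\<in>{..<b-1}. \<forall>x\<in>?V. \<forall>y\<in>S j. x \<notin> S j \<longrightarrow> BL f L a b \<le> hitting_time ?V ?E (local_cond f ?V ?E) x y"
    proof (intro ballI impI)
      fix j x y assume jJ: "j \<in> {..<b-1}" and xV: "x \<in> ?V" and yS: "y \<in> S j" and xS: "x \<notin> S j"
      have j: "j < b - 1" using jJ by simp
      define \<psi> where "\<psi> u = psiL f L a b j (dec u)" for u
      obtain y' where y': "y' \<in> SL a j" "y = enc y'" using yS by (auto simp: S_def)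
      have yV: "y \<in> ?V" using y' SLsub[OF j] by auto
      obtain x' where x': "x' \<in> VL L a b" "x = enc x'" using xV by (auto simp: gV_def)
      have x'S: "x' \<notin> SL a j" using xS x' by (auto simp: S_def)
      have "\<psi> x \<le> hitting_time ?V ?E (local_cond f ?V ?E) x y"
      proof (rule hit_lower[OF ok con yV _ _ xV])
        show "\<psi> y \<le> 0" using y' by (auto simp: \<psi>_def SL_def psiL_def)
        show "\<forall>u\<in>?V. u \<noteq> y \<longrightarrow> 0 < \<psi> u \<longrightarrow>
          (\<Sum>w\<in>nbrs ?V ?E u. local_cond f ?V ?E u w * (\<psi> u - \<psi> w)) \<le> (\<Sum>w\<in>nbrs ?V ?E u. local_cond f ?V ?E u w)"
        proof (intro ballI impI)
          fix u assume u: "u \<in> ?V" "0 < \<psi> u"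
          then obtain z where z: "z \<in> VL L a b" "u = enc z" by (auto simp: gV_def)
          have pz: "0 < psiL f L a b j z" using u z by (simp add: \<psi>_def)
          show "(\<Sum>w\<in>nbrs ?V ?E u. local_cond f ?V ?E u w * (\<psi> u - \<psi> w)) \<le> (\<Sum>w\<in>nbrs ?V ?E u. local_cond f ?V ?E u w)"
            unfolding z(2) \<psi>_def
            by (rule sub_enc[where \<psi>="psiL f L a b j" and f=f and V'="VL L a b" and E'="EL L a b", OF z(1) L_sub[OF j z(1) pz]])
        qed
      qed
      moreover have "BL f L a b \<le> \<psi> x" using L_lower[OF x'(1) x'S] x' by (simp add: \<psi>_def)
      ultimately show "BL f L a b \<le> hitting_time ?V ?E (local_cond f ?V ?E) x y" by simp
    qed
  qed
  then show "real (b - 1) * BL f L a b \<le> cyc_sum ?V ?E (local_cond f ?V ?E) xs" by simp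
qed

end
end

lemma cyc_ge:
  assumes finV: "finite V" and ne: "V \<noteq> {}"
    and all: "\<forall>xs. distinct xs \<and> set xs = V \<longrightarrow> R \<le> cyc_sum V E c xs"
  shows "R \<le> cyclic_cover_time V E c"
proof -
  define A where "A = {cyc_sum V E c xs | xs. distinct xs \<and> set xs = V}"
  have "A \<subseteq> cyc_sum V E c ` {xs. set xs \<subseteq> V \<and> distinct xs}" unfolding A_def by auto
  moreover have "finite (cyc_sum V E c ` {xs. set xs \<subseteq> V \<and> distinct xs})"
    using finite_subset_distinct[OF finV] by simp
  ultimately have finA: "finite A" by (rule finite_subset)
  obtain xs where "set xs = V" "distinct xs" using finite_distinct_list[OF finV] by blast
  then have neA: "A \<noteq> {}" unfolding A_def by auto
  have "Min A \<in> A" using Min_in[OF finA neA] .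
  then obtain ys where "distinct ys" "set ys = V" "Min A = cyc_sum V E c ys" unfolding A_def by auto
  then show ?thesis using all by (simp add: cyclic_cover_time_def A_def[symmetric])
qed

lemma ar_up1:
  fixes x F S :: real
  assumes x: "1 \<le> x" and S: "0 \<le> S" and h: "x * F * (1 + x) \<le> S * (x + 2)^2"
  shows "F \<le> 9/2 * S"
proof -
  have xx: "x \<le> x * x" using x by (simp add: mult_le_cancel_left1)
  have e: "(x + 2)^2 = x * x + 4 * x + 4" by (simp add: power2_eq_square algebra_simps)
  have e2: "x * (1 + x) = x + x * x" by (simp add: algebra_simps)
  have e3: "9/2 * (x * (1 + x)) = 9/2 * x + 9/2 * (x * x)" by (simp add: algebra_simps)
  have q: "(x + 2)^2 \<le> 9/2 * (x * (1 + x))" unfolding e e3 using xx x by linarith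
  have p: "0 < x * (1 + x)" using x by simp
  have "x * (1 + x) * F \<le> S * (x + 2)^2" using h by (simp add: algebra_simps)
  also have "\<dots> \<le> S * (9/2 * (x * (1 + x)))" by (rule mult_left_mono[OF q S])
  finally have "x * (1 + x) * F \<le> x * (1 + x) * (9/2 * S)" by (simp add: algebra_simps)
  then show ?thesis using p by (rule mult_left_le_imp_le)
qed

lemma ar_up2:
  fixes p q F S :: real
  assumes p: "2 \<le> p" and pq: "p \<le> q" and S: "0 \<le> S" and F: "0 \<le> F"
    and h: "q * ((p - 1) * F) * (p + q) \<le> S * (p + q + 1)^2"
  shows "p * F \<le> 8 * S"
proof -
  define t where "t = p + q"
  have t4: "4 \<le> t" using p pq by (simp add: t_def)
  have tt: "4 * t \<le> t * t" using t4 by (simp add: mult_right_mono)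
  have e: "(t + 1)^2 = t * t + 2 * t + 1" by (simp add: power2_eq_square algebra_simps)
  have a1: "(t + 1)^2 \<le> 2 * (t * t)" unfolding e using tt t4 by linarith
  have a2: "p \<le> 2 * (p - 1)" using p by simp
  have a3: "t \<le> 2 * q" using pq by (simp add: t_def)
  have pos: "0 < q * (p - 1) * t" using p pq t4 by simp
  have "p * (t + 1)^2 \<le> (2 * (p - 1)) * (2 * (t * t))"
    by (rule mult_mono[OF a2 a1]) (use p in auto)
  also have "\<dots> = 4 * (p - 1) * t * t" by simp
  also have "\<dots> \<le> 4 * (p - 1) * t * (2 * q)" using a3 p t4 by (intro mult_left_mono) auto
  finally have b: "p * (t + 1)^2 \<le> 8 * (q * (p - 1) * t)" by (simp add: algebra_simps)
  have "(q * (p - 1) * t) * (p * F) = p * (q * ((p - 1) * F) * t)" by (simp add: algebra_simps)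
  also have "\<dots> \<le> p * (S * (t + 1)^2)" using h p by (intro mult_left_mono) (auto simp: t_def)
  also have "\<dots> = S * (p * (t + 1)^2)" by simp
  also have "\<dots> \<le> S * (8 * (q * (p - 1) * t))" using b S by (rule mult_left_mono)
  finally have "(q * (p - 1) * t) * (p * F) \<le> (q * (p - 1) * t) * (8 * S)" by (simp add: algebra_simps)
  then show ?thesis using pos by (rule mult_left_le_imp_le)
qed

lemma ar_lo:
  fixes A Bm F s K :: real
  assumes A: "1 \<le> A" and Bm: "1 \<le> Bm" and s: "0 \<le> s" and KF: "0 \<le> K * F"
    and h: "Bm * s * (2 * (Bm * A) + 1) \<le> 3 * K * F * (2 * (Bm * A) + 3)^2"
  shows "2 * s \<le> 75 * K * A * F"
proof -
  define M where "M = Bm * A"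
  have M1: "1 \<le> M" using mult_mono[of 1 Bm 1 A] A Bm by (simp add: M_def)
  have MM: "M \<le> M * M" using M1 by (simp add: mult_le_cancel_left1)
  have e: "(2 * M + 3)^2 = 4 * (M * M) + 12 * M + 9" by (simp add: power2_eq_square algebra_simps)
  have c1: "(2 * M + 3)^2 \<le> 25 * (M * M)" unfolding e using MM M1 by linarith
  have "M * M * (2 * s) \<le> M * s * (2 * M + 1)" using M1 s by (simp add: algebra_simps)
  also have "\<dots> = A * (Bm * s * (2 * M + 1))" by (simp add: M_def algebra_simps)
  also have "\<dots> \<le> A * (3 * K * F * (2 * M + 3)^2)" using h A by (intro mult_left_mono) (auto simp: M_def)
  also have "\<dots> = (3 * A * (K * F)) * (2 * M + 3)^2" by (simp add: algebra_simps)
  also have "\<dots> \<le> (3 * A * (K * F)) * (25 * (M * M))" using c1 A KF by (intro mult_left_mono) auto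
  finally have "M * M * (2 * s) \<le> M * M * (75 * K * A * F)" by (simp add: algebra_simps)
  then show ?thesis using M1 by (simp add: mult_le_cancel_left_pos)
qed


context
  fixes f :: "nat \<Rightarrow> nat \<Rightarrow> real" and K :: real
  assumes pos: "\<forall>a b. 1 \<le> a \<longrightarrow> 1 \<le> b \<longrightarrow> 0 < f a b"
    and symm: "\<forall>a b. f a b = f b a"
    and K0: "0 < K"
    and hyp: "\<forall>V E. simple_graph V E \<and> graph_connected V E \<longrightarrow>
        cyclic_cover_time V E (local_cond f V E) \<le> K * real (card V) ^ 2"
begin

lemma up_core:
  assumes a1: "1 \<le> a" and b1: "1 \<le> b"
  shows "real b * (f a (Suc b) + real (a-1) * f a b) * real (a + b) \<le> 4 * K * f 2 2 * (real (a + b + 1))^2"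
proof -
  define L where "L = a + b + 2"
  have L3: "3 \<le> L" using a1 b1 by (simp add: L_def)
  let ?V = "gV (VU L a b)" and ?E = "gE (VU L a b) (EU L a b)"
  have M: "simple_graph ?V ?E \<and> graph_connected ?V ?E \<and> card ?V \<le> L + a + b
   \<and> (\<forall>xs. distinct xs \<and> set xs = ?V \<longrightarrow> lamU f a b * (real L - 2) \<le> cyc_sum ?V ?E (local_cond f ?V ?E) xs)"
    by (rule U_main[OF L3 a1 b1 pos symm])
  have finV: "finite ?V" and neV: "?V \<noteq> {}" using M by (auto simp: simple_graph_def graph_connected_def)
  have "lamU f a b * (real L - 2) \<le> cyclic_cover_time ?V ?E (local_cond f ?V ?E)"
    by (rule cyc_ge[OF finV neV]) (use M in blast)
  also have "\<dots> \<le> K * real (card ?V) ^ 2" using hyp M by blast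
  also have "\<dots> \<le> K * real (L + a + b) ^ 2"
  proof -
    have cv: "real (card ?V) \<le> real (L + a + b)" using M of_nat_le_iff by blast
    show ?thesis by (rule mult_left_mono[OF power_mono[OF cv]]) (use K0 in auto)
  qed
  finally have A: "lamU f a b * (real L - 2) \<le> K * real (L + a + b) ^ 2" .
  have s: "0 < f 2 2" using pos by simp
  have e1: "lamU f a b * (real L - 2) * f 2 2 = real b * (f a (Suc b) + real (a-1) * f a b) * real (a + b)"
    using s by (simp add: lamU_def L_def)
  have e2: "real (L + a + b) ^ 2 = 4 * (real (a + b + 1))^2" by (simp add: L_def power2_eq_square algebra_simps)
  have "lamU f a b * (real L - 2) * f 2 2 \<le> K * real (L + a + b) ^ 2 * f 2 2"
    using A s by (simp add: mult_right_mono)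
  then show ?thesis using e1 e2 by (simp add: algebra_simps)
qed

lemma lo_core:
  assumes a1: "1 \<le> a" and b2: "2 \<le> b"
  shows "real (b - 1) * f 2 2 * (2 * real ((b - 1) * a) + 1) \<le> 3 * K * f b a * (2 * real ((b - 1) * a) + 3) ^ 2"
proof -
  define m where "m = (b - 1) * a"
  define L where "L = m + 2"
  have m1: "1 \<le> m" using a1 b2 by (simp add: m_def)
  have L3: "3 \<le> L" using m1 by (simp add: L_def)
  let ?V = "gV (VL L a b)" and ?E = "gE (VL L a b) (EL L a b)"
  have M: "simple_graph ?V ?E \<and> graph_connected ?V ?E \<and> card ?V \<le> L + 1 + (b - 1) * a
   \<and> (\<forall>xs. distinct xs \<and> set xs = ?V \<longrightarrow> real (b - 1) * BL f L a b \<le> cyc_sum ?V ?E (local_cond f ?V ?E) xs)"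
    by (rule L_main[OF L3 a1 b2 pos symm])
  have finV: "finite ?V" and neV: "?V \<noteq> {}" using M by (auto simp: simple_graph_def graph_connected_def)
  have "real (b - 1) * BL f L a b \<le> cyclic_cover_time ?V ?E (local_cond f ?V ?E)"
    by (rule cyc_ge[OF finV neV]) (use M in blast)
  also have "\<dots> \<le> K * real (card ?V) ^ 2" using hyp M by blast
  also have "\<dots> \<le> K * real (L + 1 + (b - 1) * a) ^ 2"
  proof -
    have cv: "real (card ?V) \<le> real (L + 1 + (b - 1) * a)" using M of_nat_le_iff by blast
    show ?thesis by (rule mult_left_mono[OF power_mono[OF cv]]) (use K0 in auto)
  qed
  finally have A: "real (b - 1) * BL f L a b \<le> K * real (L + 1 + (b - 1) * a) ^ 2" .
  have fa: "0 < f b a" using pos a1 b2 by simp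
  have e1: "real (b - 1) * BL f L a b * (3 * f b a) = real (b - 1) * f 2 2 * (2 * real m + 1)"
    using fa by (simp add: BL_def L_def field_simps)
  have e2: "real (L + 1 + (b - 1) * a) = 2 * real m + 3" by (simp add: L_def m_def)
  have "real (b - 1) * BL f L a b * (3 * f b a) \<le> K * real (L + 1 + (b - 1) * a) ^ 2 * (3 * f b a)"
    using A fa by (simp add: mult_right_mono)
  then show ?thesis using e1 e2 by (simp add: m_def algebra_simps)
qed


lemma bound_up:
  assumes p1: "1 \<le> p" and q1: "1 \<le> q" and n11: "\<not> (p = 1 \<and> q = 1)"
  shows "f p q * real (min p q) \<le> 32 * K * f 2 2"
proof -
  define m where "m = min p q"
  define M where "M = max p q"
  have fpq: "f p q = f m M" using symm by (cases "p \<le> q") (auto simp: m_def M_def min_def max_def)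
  have m1: "1 \<le> m" and mM: "m \<le> M" and M2: "2 \<le> M" using p1 q1 n11 by (auto simp: m_def M_def)
  have s: "0 < f 2 2" using pos by simp
  have S: "0 \<le> 4 * K * f 2 2" using K0 s by simp
  show ?thesis
  proof (cases "m = 1")
    case True
    define b where "b = M - 1"
    have b1: "1 \<le> b" using M2 by (simp add: b_def)
    have U: "real b * (f 1 (Suc b) + real (1-1) * f 1 b) * real (1 + b) \<le> 4 * K * f 2 2 * (real (1 + b + 1))^2"
      by (rule up_core[OF _ b1]) simp
    have SbM: "Suc b = M" using M2 by (simp add: b_def)
    have h: "real b * f m M * (1 + real b) \<le> 4 * K * f 2 2 * (real b + 2)^2"
      using U True by (simp add: SbM[symmetric] add.commute)
    have "f m M \<le> 9/2 * (4 * K * f 2 2)"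
      by (rule ar_up1[OF _ S h]) (use b1 in simp)
    moreover have "18 * (K * f 2 2) \<le> 32 * K * f 2 2" using K0 s by simp
    ultimately show ?thesis using True fpq by (simp add: m_def)
  next
    case False
    then have m2: "2 \<le> m" using m1 by simp
    have U: "real M * (f m (Suc M) + real (m-1) * f m M) * real (m + M) \<le> 4 * K * f 2 2 * (real (m + M + 1))^2"
      by (rule up_core) (use m1 M2 in auto)
    have f0: "0 \<le> f m (Suc M)" using pos m1 by (simp add: less_imp_le)
    have F0: "0 \<le> f m M" using pos m1 M2 by (simp add: less_imp_le)
    have "real M * (real (m-1) * f m M) * real (m + M) \<le> real M * (f m (Suc M) + real (m-1) * f m M) * real (m + M)"
      using f0 by (intro mult_right_mono mult_left_mono) auto
    then have h: "real M * ((real m - 1) * f m M) * (real m + real M) \<le> 4 * K * f 2 2 * (real m + real M + 1)^2"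
      using U m1 by (simp add: of_nat_diff add_ac)
    have "real m * f m M \<le> 8 * (4 * K * f 2 2)"
      by (rule ar_up2[OF _ _ S F0 h]) (use m2 mM in auto)
    then show ?thesis using fpq by (simp add: m_def algebra_simps)
  qed
qed

lemma bound_lo:
  assumes p1: "1 \<le> p" and q1: "1 \<le> q" and n11: "\<not> (p = 1 \<and> q = 1)"
  shows "2 * f 2 2 \<le> 75 * K * real (min p q) * f p q"
proof -
  define m where "m = min p q"
  define M where "M = max p q"
  have fpq: "f p q = f M m" using symm by (cases "p \<le> q") (auto simp: m_def M_def min_def max_def)
  have m1: "1 \<le> m" and M2: "2 \<le> M" using p1 q1 n11 by (auto simp: m_def M_def)
  have s: "0 < f 2 2" using pos by simp
  have Lo: "real (M - 1) * f 2 2 * (2 * real ((M - 1) * m) + 1) \<le> 3 * K * f M m * (2 * real ((M - 1) * m) + 3) ^ 2"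
    by (rule lo_core[OF m1 M2])
  have KF: "0 \<le> K * f M m" using K0 pos m1 M2 by (simp add: less_imp_le)
  have "2 * f 2 2 \<le> 75 * K * real m * f M m"
    by (rule ar_lo[OF _ _ _ KF]) (use Lo m1 M2 s in auto)
  then show ?thesis using fpq by (simp add: m_def)
qed

end

lemma deg_pos:
  assumes sg: "simple_graph V E" and e: "E u v"
  shows "1 \<le> deg V E u" "1 \<le> deg V E v"
proof -
  have "v \<in> nbrs V E u" "u \<in> nbrs V E v" using sg e by (auto simp: simple_graph_def nbrs_def)
  then show "1 \<le> deg V E u" "1 \<le> deg V E v" using nbrs_fin[OF sg] unfolding deg_def
    by (metis One_nat_def Suc_leI card_gt_0_iff empty_iff)+
qed

theorem proposition2:
  fixes f :: "nat \<Rightarrow> nat \<Rightarrow> real"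
  assumes pos: "\<forall>a b. 1 \<le> a \<longrightarrow> 1 \<le> b \<longrightarrow> 0 < f a b"
    and symm: "\<forall>a b. f a b = f b a"
  shows "roughly_equivalent min_deg_rule (local_cond f) \<or>
         (\<forall>K::real. K > 0 \<longrightarrow> (\<exists>V E. simple_graph V E \<and> graph_connected V E \<and>
            cyclic_cover_time V E (local_cond f V E) > K * real (card V) ^ 2))"
proof (rule disjCI)
  assume "\<not> (\<forall>K::real. K > 0 \<longrightarrow> (\<exists>V E. simple_graph V E \<and> graph_connected V E \<and>
            cyclic_cover_time V E (local_cond f V E) > K * real (card V) ^ 2))"
  then obtain K :: real where K0: "0 < K" and nex: "\<not> (\<exists>V E. simple_graph V E \<and> graph_connected V E \<and>
            cyclic_cover_time V E (local_cond f V E) > K * real (card V) ^ 2)" by blast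
  have hyp: "\<forall>V E. simple_graph V E \<and> graph_connected V E \<longrightarrow>
        cyclic_cover_time V E (local_cond f V E) \<le> K * real (card V) ^ 2"
    using nex by (auto simp: not_less)
  define s where "s = f 2 2"
  have s0: "0 < s" using pos by (simp add: s_def)
  define \<alpha> where "\<alpha> = min (2 * s / (75 * K)) (f 1 1)"
  define \<beta> where "\<beta> = max (32 * K * s) (f 1 1)"
  have f11: "0 < f 1 1" using pos by simp
  show "roughly_equivalent min_deg_rule (local_cond f)"
    unfolding roughly_equivalent_def
  proof (rule exI[of _ \<alpha>], rule exI[of _ \<beta>], intro conjI)
    show "0 < \<alpha>" using s0 K0 f11 by (simp add: \<alpha>_def)
    show "\<alpha> \<le> \<beta>" by (simp add: \<alpha>_def \<beta>_def)
    show "\<forall>V E u v. simple_graph V E \<and> E u v \<longrightarrow> \<alpha> * min_deg_rule V E u v \<le> local_cond f V E u v \<and> local_cond f V E u v \<le> \<beta> * min_deg_rule V E u v"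
    proof (intro allI impI)
    fix V E u v assume ge: "simple_graph V E \<and> E u v"
    define d1 where "d1 = deg V E u"
    define d2 where "d2 = deg V E v"
    have d1: "1 \<le> d1" and d2: "1 \<le> d2" using deg_pos ge by (auto simp: d1_def d2_def)
    define m where "m = real (min d1 d2)"
    have m1: "1 \<le> m" using d1 d2 by (simp add: m_def)
    have md: "min_deg_rule V E u v = 1 / m" by (simp add: min_deg_rule_def m_def d1_def d2_def)
    have lc: "local_cond f V E u v = f d1 d2" by (simp add: local_cond_def d1_def d2_def)
    show "\<alpha> * min_deg_rule V E u v \<le> local_cond f V E u v \<and> local_cond f V E u v \<le> \<beta> * min_deg_rule V E u v"
    proof (cases "d1 = 1 \<and> d2 = 1")
      case True
      then have "m = 1" by (simp add: m_def)
      then show ?thesis using True md lc by (simp add: \<alpha>_def \<beta>_def)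
    next
      case False
      have up: "f d1 d2 * m \<le> 32 * K * s"
        using bound_up[OF pos symm K0 hyp d1 d2 False] by (simp add: m_def s_def)
      have lo: "2 * s \<le> 75 * K * m * f d1 d2"
        using bound_lo[OF pos symm K0 hyp d1 d2 False] by (simp add: m_def s_def)
      have A: "\<alpha> / m \<le> f d1 d2"
      proof -
        have "\<alpha> \<le> 2 * s / (75 * K)" by (simp add: \<alpha>_def)
        also have "\<dots> \<le> m * f d1 d2" using lo K0 by (simp add: divide_le_eq algebra_simps)
        finally show ?thesis using m1 by (simp add: divide_le_eq algebra_simps)
      qed
      have B: "f d1 d2 \<le> \<beta> / m"
      proof -
        have "f d1 d2 * m \<le> \<beta>" using up by (simp add: \<beta>_def)
        then show ?thesis using m1 by (simp add: le_divide_eq)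
      qed
      show ?thesis using A B md lc by simp
    qed
    qed
  qed
qed

end
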